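(* Let $\mathcal E=\{p_1,\dots,p_n\}\subseteq\mathbb K[x,y_1,\dots,y_n]$ be a set of $n$ polynomials, regarded as a vector. Let $\bar r_0\in\mathbb K^n$ be such that $\mathcal E(0,\bar r_0)=0$ and the matrix $(\nabla^{\eth}_{\bar y}\mathcal E)(0,\bar r_0,\bar r_0)\in\mathbb K^{n\times n}$ is invertible. Then there is a unique stream solution $\bar\sigma\in\Sigma^n$ of $\mathcal E$ with $\bar\sigma(0)=\bar r_0$. Moreover, $(\nabla^{\eth}_{\bar y}\mathcal E)(X,\bar r_0,\bar\sigma)$ is invertible in $\Sigma^{n\times n}$ and $\bar\sigma$ satisfies $$\bar\sigma'^{T}=-\big(\nabla^{\eth}_{\bar y}\mathcal E\big)(X,\bar r_0,\bar\sigma)^{-1}\cdot\Big(\frac{\eth\mathcal E}{\eth x}(X,\bar\sigma)\Big)^{T},\qquad \bar\sigma(0)=\bar r_0.$$ Furthermore, there exist polynomials $P_1,\dots,P_{n+1}\in\mathbb K[x,y_1,\dots,y_n,w]$ (with $w$ a new variable) and an initial value $c\in\mathbb K$, constructed from $\mathcal E$ and $\bar r_0$, such that the polynomial stream differential equation initial value problem $y_i'=P_i$, $y_i(0)=r_{0i}$ ($i=1,\dots,n$), $w'=P_{n+1}$, $w(0)=c$ has as unique solution $(\bar\sigma,\tau)$ for a suitable stream $\tau$.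
   Context: $\mathbb K$ is a field of characteristic $0$; streams $\Sigma=\mathbb K^\omega$ with pointwise sum, convolution product $(\sigma\times\tau)(i)=\sum_{j=0}^{i}\sigma(j)\tau(i-j)$, scalars identified with $(r,0,0,\dots)$, $X=(0,1,0,\dots)$, stream derivative $\sigma'(i)=\sigma(i+1)$. A stream solution of $\mathcal E$ is $\bar\sigma\in\Sigma^n$ with $p(X,\bar\sigma)=0$ for all $p\in\mathcal E$ ($x\mapsto X$, $y_i\mapsto\sigma_i$). A solution of a polynomial stream differential equation initial value problem $y_i'=P_i$, $y_i(0)=r_i$ is a tuple of streams $\bar\sigma$ with $\sigma_i'=P_i(X,\bar\sigma)$, $\sigma_i(0)=r_i$. Syntactic stream derivative of $p\in\mathbb K[x,\bar y]$: with new indeterminates $y_{0i},y_i'$, $y_0:=x$, $y_{00}:=0$, total order $y_0<y_1<\dots<y_n$, $\min(m)$ the least variable in monomial $m\ne1$: $(1)'=0$, $(x)'=1$, $(y_i)'=y_i'$, $(y_im)'=y_i'm+y_{0i}(m)'$ when $m\ne1$ and $y_i=\min(y_im)$, extended linearly. Writing uniquely $p'=q_0+\sum_{i=1}^nq_iy_i'$ with $q_j\in\mathbb K[x,\bar y_0,\bar y]$, set $\frac{\eth p}{\eth x}:=q_0$ (lies in $\mathbb K[x,\bar y]$) and $\frac{\eth p}{\eth y_i}:=q_i$. $\nabla^{\eth}_{\bar y}\mathcal E$ is the $n\times n$ polynomial matrix with entries $\frac{\eth p_i}{\eth y_j}$, and $\frac{\eth\mathcal E}{\eth x}=(\frac{\eth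 p_1}{\eth x},\dots,\frac{\eth p_n}{\eth x})$. $(\nabla^{\eth}_{\bar y}\mathcal E)(0,\bar r_0,\bar r_0)$ means evaluation at $x=0$, $\bar y_0=\bar r_0$, $\bar y=\bar r_0$; evaluation at $(X,\bar r_0,\bar\sigma)$ substitutes $x\mapsto X$, $y_{0i}\mapsto r_{0i}$, $y_i\mapsto\sigma_i$. *)

theory Defs
  imports "HOL-Library.Poly_Mapping" "HOL-Computational_Algebra.Formal_Power_Series"
          "Jordan_Normal_Form.Matrix"
begin

text \<open>Indeterminates.  Indices are 0-based: Y i stands for y_(i+1), Y0 i for y_(0,i+1),
  Yd i for y'_(i+1); W is the extra variable w.\<close>
datatype var = X | Y nat | Y0 nat | Yd nat | W

type_synonym 'a mpoly = "(var \<Rightarrow>\<^sub>0 nat) \<Rightarrow>\<^sub>0 'a"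

definition PVar :: "var \<Rightarrow> 'a::comm_ring_1 mpoly" where
  "PVar v = Poly_Mapping.single (Poly_Mapping.single v 1) 1"

definition PConst :: "'a::comm_ring_1 \<Rightarrow> 'a mpoly" where
  "PConst c = Poly_Mapping.single 0 c"

definition pvars :: "'a::zero mpoly \<Rightarrow> var set" where
  "pvars p = (\<Union>m\<in>Poly_Mapping.keys p. Poly_Mapping.keys m)"

definition peval :: "('a::zero \<Rightarrow> 'b::comm_ring_1) \<Rightarrow> (var \<Rightarrow> 'b) \<Rightarrow> 'a mpoly \<Rightarrow> 'b" where
  "peval f v p = (\<Sum>m\<in>Poly_Mapping.keys p. f (Poly_Mapping.lookup p m) * (\<Prod>u\<in>Poly_Mapping.keys m. v u ^ Poly_Mapping.lookup m u))"

text \<open>Variables of K[x,y] are ranked x = 0, y_(i+1) = Suc i; the total order is x < y_1 < ... < y_n.\<close>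
fun rvar :: "nat \<Rightarrow> var" where
  "rvar 0 = X" | "rvar (Suc i) = Y i"

text \<open>The variables of a monomial of K[x,y], listed in increasing order with multiplicity.\<close>
definition mono_list :: "(var \<Rightarrow>\<^sub>0 nat) \<Rightarrow> nat list" where
  "mono_list m = concat (map (\<lambda>k. replicate (Poly_Mapping.lookup m (rvar k)) k)
      [0..<Suc (\<Sum>u\<in>Poly_Mapping.keys m. case u of Y i \<Rightarrow> Suc i | _ \<Rightarrow> 0)])"

definition list_mono :: "nat list \<Rightarrow> 'a::comm_ring_1 mpoly" where
  "list_mono l = prod_list (map (\<lambda>k. PVar (rvar k)) l)"

fun dvar :: "nat \<Rightarrow> 'a::comm_ring_1 mpoly" where
  "dvar 0 = 1" | "dvar (Suc i) = PVar (Yd i)"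

fun y0var :: "nat \<Rightarrow> 'a::comm_ring_1 mpoly" where
  "y0var 0 = 0" | "y0var (Suc i) = PVar (Y0 i)"

text \<open>(1)' = 0 and (y_k m)' = y_k' m + y_(0k) (m)' with y_k = min (y_k m);
  for m = 1 this gives (y_k)' = y_k' and (x)' = 1.\<close>
fun mono_deriv :: "nat list \<Rightarrow> 'a::comm_ring_1 mpoly" where
  "mono_deriv [] = 0"
| "mono_deriv (k # l) = dvar k * list_mono l + y0var k * mono_deriv l"

definition sderiv :: "'a::comm_ring_1 mpoly \<Rightarrow> 'a mpoly" where
  "sderiv p = (\<Sum>m\<in>Poly_Mapping.keys p. PConst (Poly_Mapping.lookup p m) * mono_deriv (mono_list m))"

text \<open>Coefficient extraction from p' = q_0 + sum q_i y_i'.  dpart None selects q_0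
  (terms without any y'), dpart (Some i) selects q_(i+1) (coefficient of y_(i+1)').\<close>
definition dpart :: "nat option \<Rightarrow> 'a::comm_ring_1 mpoly \<Rightarrow> 'a mpoly" where
  "dpart j q = (\<Sum>m\<in>Poly_Mapping.keys q.
      if (\<forall>i. Poly_Mapping.lookup m (Yd i) = (if j = Some i then 1 else 0))
      then Poly_Mapping.single (m - (case j of None \<Rightarrow> 0 | Some i \<Rightarrow> Poly_Mapping.single (Yd i) 1))
               (Poly_Mapping.lookup q m)
      else 0)"

definition eth_x :: "'a::comm_ring_1 mpoly \<Rightarrow> 'a mpoly" where
  "eth_x p = dpart None (sderiv p)"

definition eth_y :: "nat \<Rightarrow> 'a::comm_ring_1 mpoly \<Rightarrow> 'a mpoly" where
  "eth_y i p = dpart (Some i) (sderiv p)"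

text \<open>Streams are 'a fps (sequences with pointwise sum and convolution product);
  scalars are fps_const, X is fps_X, stream derivative is fps_shift 1.\<close>

abbreviation sderiv_stream :: "'a::comm_ring_1 fps \<Rightarrow> 'a fps" where
  "sderiv_stream s \<equiv> fps_shift 1 s"

definition senv :: "'a::comm_ring_1 vec \<Rightarrow> 'a fps vec \<Rightarrow> 'a fps \<Rightarrow> var \<Rightarrow> 'a fps" where
  "senv r0 s t v = (case v of X \<Rightarrow> fps_X | Y i \<Rightarrow> vec_index s i
       | Y0 i \<Rightarrow> fps_const (vec_index r0 i) | Yd i \<Rightarrow> 0 | W \<Rightarrow> t)"

definition kenv :: "'a::comm_ring_1 vec \<Rightarrow> 'a vec \<Rightarrow> var \<Rightarrow> 'a" where
  "kenv r0 r v = (case v of X \<Rightarrow> 0 | Y i \<Rightarrow> vec_index r i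
       | Y0 i \<Rightarrow> vec_index r0 i | Yd i \<Rightarrow> 0 | W \<Rightarrow> 0)"

definition stream_solution :: "'a::comm_ring_1 mpoly vec \<Rightarrow> 'a fps vec \<Rightarrow> bool" where
  "stream_solution E s \<longleftrightarrow> s \<in> carrier_vec (dim_vec E) \<and>
     (\<forall>i<dim_vec E. peval fps_const (senv (0\<^sub>v (dim_vec E)) s 0) (vec_index E i) = 0)"

definition ivp_solution :: "'a::comm_ring_1 mpoly vec \<Rightarrow> 'a vec \<Rightarrow> 'a \<Rightarrow> 'a fps vec \<Rightarrow> 'a fps \<Rightarrow> bool" where
  "ivp_solution P r0 c s t \<longleftrightarrow> s \<in> carrier_vec (dim_vec r0) \<and>
     (\<forall>i<dim_vec r0. sderiv_stream (vec_index s i) = peval fps_const (senv r0 s t) (vec_index P i)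
        \<and> fps_nth (vec_index s i) 0 = vec_index r0 i) \<and>
     sderiv_stream t = peval fps_const (senv r0 s t) (vec_index P (dim_vec r0)) \<and> fps_nth t 0 = c"

definition jac_stream :: "'a::comm_ring_1 mpoly vec \<Rightarrow> 'a vec \<Rightarrow> 'a fps vec \<Rightarrow> 'a fps mat" where
  "jac_stream E r0 s = mat (dim_vec E) (dim_vec E)
     (\<lambda>(i,j). peval fps_const (senv r0 s 0) (eth_y j (vec_index E i)))"

definition jac_const :: "'a::comm_ring_1 mpoly vec \<Rightarrow> 'a vec \<Rightarrow> 'a mat" where
  "jac_const E r0 = mat (dim_vec E) (dim_vec E)
     (\<lambda>(i,j). peval id (kenv r0 r0) (eth_y j (vec_index E i)))"

end

theory Submission
  imports Defs "Jordan_Normal_Form.Determinant"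
begin

definition pmon :: "(var \<Rightarrow> 'b::comm_ring_1) \<Rightarrow> (var \<Rightarrow>\<^sub>0 nat) \<Rightarrow> 'b" where
  "pmon v m = (\<Prod>u\<in>Poly_Mapping.keys m. v u ^ Poly_Mapping.lookup m u)"

lemma mon_superset: assumes "finite S" "Poly_Mapping.keys m \<subseteq> S"
  shows "pmon v m = (\<Prod>u\<in>S. v u ^ Poly_Mapping.lookup m u)"
  unfolding pmon_def
  by (rule prod.mono_neutral_left[OF assms]) (auto simp: in_keys_iff)

lemma mon_add: "pmon v (a + b) = pmon v a * pmon v b"
proof -
  let ?S = "Poly_Mapping.keys a \<union> Poly_Mapping.keys b"
  have f: "finite ?S" by simp
  have "pmon v (a + b) = (\<Prod>u\<in>?S. v u ^ Poly_Mapping.lookup (a+b) u)"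
    by (rule mon_superset[OF f]) (use keys_add[of a b] in blast)
  also have "\<dots> = (\<Prod>u\<in>?S. v u ^ Poly_Mapping.lookup a u * v u ^ Poly_Mapping.lookup b u)"
    by (simp add: lookup_add power_add)
  also have "\<dots> = pmon v a * pmon v b"
    by (simp add: prod.distrib mon_superset[OF f])
  finally show ?thesis .
qed

lemma mon_zero[simp]: "pmon v 0 = 1" by (simp add: pmon_def)

lemma mon_single[simp]: "pmon v (Poly_Mapping.single u k) = v u ^ k"
  by (simp add: pmon_def)

lemma mon_cong: "(\<And>u. u \<in> Poly_Mapping.keys m \<Longrightarrow> v u = w u) \<Longrightarrow> pmon v m = pmon w m"
  unfolding pmon_def by (rule prod.cong) auto

lemma peval_mon: "peval f v p = (\<Sum>m\<in>Poly_Mapping.keys p. f (Poly_Mapping.lookup p m) * pmon v m)"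
  unfolding peval_def pmon_def ..

lemma peval_superset: assumes "finite S" "Poly_Mapping.keys p \<subseteq> S" "f 0 = 0"
  shows "peval f v p = (\<Sum>m\<in>S. f (Poly_Mapping.lookup p m) * pmon v m)"
  unfolding peval_mon
  by (rule sum.mono_neutral_left[OF assms(1,2)]) (auto simp: in_keys_iff assms(3))

lemma peval_zero[simp]: "peval f v 0 = 0" by (simp add: peval_def)

lemma peval_single: assumes "f 0 = 0"
  shows "peval f v (Poly_Mapping.single m c) = f c * pmon v m"
  using assms by (simp add: peval_mon)

lemma peval_add: assumes "comm_ring_hom f"
  shows "peval f v (p + q) = peval f v p + peval f v q"
proof -
  interpret comm_ring_hom f by fact
  let ?S = "Poly_Mapping.keys p \<union> Poly_Mapping.keys q"
  have f: "finite ?S" by simp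
  have "peval f v (p + q) = (\<Sum>m\<in>?S. f (Poly_Mapping.lookup (p+q) m) * pmon v m)"
    by (rule peval_superset[OF f]) (use keys_add[of p q] in auto)
  also have "\<dots> = (\<Sum>m\<in>?S. f (Poly_Mapping.lookup p m) * pmon v m + f (Poly_Mapping.lookup q m) * pmon v m)"
    by (simp add: lookup_add hom_add distrib_right)
  also have "\<dots> = peval f v p + peval f v q"
    by (simp add: sum.distrib peval_superset[OF f])
  finally show ?thesis .
qed

lemma peval_sum: assumes "comm_ring_hom f"
  shows "peval f v (sum g A) = (\<Sum>a\<in>A. peval f v (g a))"
  by (induction A rule: infinite_finite_induct) (auto simp: peval_add[OF assms])

lemma poly_decomp: "p = (\<Sum>m\<in>Poly_Mapping.keys p. Poly_Mapping.single m (Poly_Mapping.lookup p m))"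
proof (rule poly_mapping_eqI)
  fix k
  show "Poly_Mapping.lookup p k = Poly_Mapping.lookup (\<Sum>m\<in>Poly_Mapping.keys p. Poly_Mapping.single m (Poly_Mapping.lookup p m)) k"
    by (simp add: lookup_sum lookup_single when_def in_keys_iff)
qed

lemma peval_mult: assumes "comm_ring_hom f"
  shows "peval f v (p * q) = peval f v p * peval f v q"
proof -
  interpret comm_ring_hom f by fact
  have "p * q = (\<Sum>a\<in>Poly_Mapping.keys p. Poly_Mapping.single a (Poly_Mapping.lookup p a)) *
     (\<Sum>b\<in>Poly_Mapping.keys q. Poly_Mapping.single b (Poly_Mapping.lookup q b))"
    using poly_decomp[of p] poly_decomp[of q] by simp
  also have "\<dots> = (\<Sum>a\<in>Poly_Mapping.keys p. \<Sum>b\<in>Poly_Mapping.keys q.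
      Poly_Mapping.single (a + b) (Poly_Mapping.lookup p a * Poly_Mapping.lookup q b))"
    by (simp add: sum_product mult_single)
  finally have "peval f v (p * q) = (\<Sum>a\<in>Poly_Mapping.keys p. \<Sum>b\<in>Poly_Mapping.keys q.
      f (Poly_Mapping.lookup p a) * pmon v a * (f (Poly_Mapping.lookup q b) * pmon v b))"
    by (simp add: peval_sum[OF assms] peval_single hom_mult mon_add ac_simps)
  also have "\<dots> = peval f v p * peval f v q"
    by (simp add: peval_mon sum_product)
  finally show ?thesis .
qed

lemma peval_one: assumes "comm_ring_hom f" shows "peval f v 1 = 1"
proof -
  interpret comm_ring_hom f by fact
  have "(1::'a mpoly) = Poly_Mapping.single 0 1" by simp
  then show ?thesis by (metis peval_single hom_zero hom_one mon_zero mult_1)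
qed

lemma peval_hom: assumes "comm_ring_hom f" shows "comm_ring_hom (peval f v)"
  by unfold_locales (simp_all add: peval_add[OF assms] peval_mult[OF assms] peval_one[OF assms])

lemma comm_ring_hom_id: "comm_ring_hom id" by unfold_locales auto

lemma comm_ring_hom_fps_const: "comm_ring_hom fps_const"
  by unfold_locales (auto simp: fps_const_add fps_const_mult)

lemma comm_ring_hom_PConst: "comm_ring_hom (PConst :: 'a::comm_ring_1 \<Rightarrow> 'a mpoly)"
  by unfold_locales (auto simp: PConst_def single_add mult_single)

lemma comm_ring_hom_nth0: "comm_ring_hom (\<lambda>a::'a::comm_ring_1 fps. fps_nth a 0)"
  apply unfold_locales
  apply simp_all
  done

lemma peval_PConst: assumes "comm_ring_hom f" shows "peval f v (PConst c) = f c"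
proof -
  interpret comm_ring_hom f by fact
  show ?thesis unfolding PConst_def by (simp add: peval_single)
qed

lemma peval_PVar: assumes "comm_ring_hom f" shows "peval f v (PVar u) = v u"
proof -
  interpret comm_ring_hom f by fact
  show ?thesis unfolding PVar_def by (simp add: peval_single)
qed

lemma peval_compose: assumes "comm_ring_hom h"
  shows "h (peval f v p) = peval (h \<circ> f) (h \<circ> v) p"
proof -
  interpret comm_ring_hom h by fact
  show ?thesis unfolding peval_def hom_sum hom_mult hom_prod hom_power o_def ..
qed

lemma peval_cong: "(\<And>u. u \<in> pvars p \<Longrightarrow> v u = w u) \<Longrightarrow> peval f v p = peval f w p"
  unfolding peval_mon pvars_def
  by (rule sum.cong[OF refl], rule arg_cong[where f="\<lambda>x. _ * x"], rule mon_cong) auto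

lemmas hc = comm_ring_hom_fps_const

lemma keys_add_nat: "Poly_Mapping.keys (a + b :: var \<Rightarrow>\<^sub>0 nat) = Poly_Mapping.keys a \<union> Poly_Mapping.keys b"
  by (auto simp: in_keys_iff lookup_add)

lemma pvars_add: "pvars (p + q) \<subseteq> pvars p \<union> pvars q"
  unfolding pvars_def using keys_add[of p q] by blast

lemma pvars_mult: "pvars (p * q) \<subseteq> pvars p \<union> pvars q"
proof
  fix u assume "u \<in> pvars (p * q)"
  then obtain m where m: "m \<in> Poly_Mapping.keys (p * q)" "u \<in> Poly_Mapping.keys m" unfolding pvars_def by blast
  from m(1) keys_mult[of p q] obtain a b where "m = a + b" "a \<in> Poly_Mapping.keys p" "b \<in> Poly_Mapping.keys q" by blast
  with m(2) show "u \<in> pvars p \<union> pvars q" unfolding pvars_def by (auto simp: keys_add_nat)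
qed

lemma pvars_single: "pvars (Poly_Mapping.single m c) \<subseteq> Poly_Mapping.keys m"
  unfolding pvars_def by auto

lemma pvars_zero[simp]: "pvars 0 = {}" unfolding pvars_def by auto
lemma pvars_one[simp]: "pvars (1::'a::comm_ring_1 mpoly) = {}" unfolding pvars_def by auto
lemma pvars_PConst[simp]: "pvars (PConst c) = {}" unfolding pvars_def PConst_def by auto
lemma pvars_PVar: "pvars (PVar u :: 'a::comm_ring_1 mpoly) \<subseteq> {u}" unfolding pvars_def PVar_def by auto
lemma pvars_uminus[simp]: "pvars (- p) = pvars p" unfolding pvars_def by (simp add: keys_minus)

lemma pvars_sum: "pvars (sum g A) \<subseteq> (\<Union>a\<in>A. pvars (g a))"
proof (induction A rule: infinite_finite_induct)
  case (insert x F)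
  then show ?case using pvars_add[of "g x" "sum g F"] by auto
qed auto

lemma pvars_prod: "pvars (prod g A) \<subseteq> (\<Union>a\<in>A. pvars (g a :: 'a::comm_ring_1 mpoly))"
proof (induction A rule: infinite_finite_induct)
  case (insert x F)
  then show ?case using pvars_mult[of "g x" "prod g F"] by auto
qed auto

lemma pvars_power: "pvars (p ^ k :: 'a::comm_ring_1 mpoly) \<subseteq> pvars p"
  by (induction k) (use pvars_mult in auto)

lemma pvars_of_int[simp]: "pvars (of_int k :: 'a::comm_ring_1 mpoly) = {}"
proof -
  interpret comm_ring_hom "PConst :: 'a \<Rightarrow> 'a mpoly" by (rule comm_ring_hom_PConst)
  have "(of_int k :: 'a mpoly) = PConst (of_int k)" by (simp add: hom_of_int)
  then show ?thesis by simp
qed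

lemma pvars_det: assumes "A \<in> carrier_mat n n" "\<And>i j. i < n \<Longrightarrow> j < n \<Longrightarrow> pvars (A $$ (i,j)) \<subseteq> V"
  shows "pvars (det A :: 'a::comm_ring_1 mpoly) \<subseteq> V"
proof -
  have "pvars (det A) \<subseteq> (\<Union>p\<in>{p. p permutes {0..<n}}. pvars (of_int (sign p) * (\<Prod>i = 0..<n. A $$ (i, p i))))"
    unfolding det_def'[OF assms(1)] by (rule pvars_sum)
  also have "\<dots> \<subseteq> V"
  proof (rule UN_least)
    fix p assume p: "p \<in> {p. p permutes {0..<n}}"
    have pp: "p permutes {0..<n}" using p by simp
    have "\<forall>a\<in>{0..<n}. pvars (A $$ (a, p a)) \<subseteq> V"
      using permutes_in_image[OF pp] assms(2) by auto
    then have "pvars (\<Prod>i = 0..<n. A $$ (i, p i)) \<subseteq> V"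
      using pvars_prod[of "\<lambda>i. A $$ (i, p i)" "{0..<n}"] by blast
    then show "pvars (of_int (sign p) * (\<Prod>i = 0..<n. A $$ (i, p i))) \<subseteq> V"
      using pvars_mult[of "of_int (sign p)" "\<Prod>i = 0..<n. A $$ (i, p i)"] by auto
  qed
  finally show ?thesis .
qed

lemma pvars_peval: "pvars (peval PConst e p) \<subseteq> (\<Union>u\<in>pvars p. pvars (e u))"
proof -
  have "pvars (peval PConst e p) \<subseteq> (\<Union>m\<in>Poly_Mapping.keys p. pvars (PConst (Poly_Mapping.lookup p m) * pmon e m))"
    unfolding peval_mon by (rule pvars_sum)
  also have "\<dots> \<subseteq> (\<Union>u\<in>pvars p. pvars (e u))"
  proof (rule UN_least)
    fix m assume m: "m \<in> Poly_Mapping.keys p"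
    have "pvars (pmon e m) \<subseteq> (\<Union>u\<in>Poly_Mapping.keys m. pvars (e u ^ Poly_Mapping.lookup m u))"
      unfolding pmon_def by (rule pvars_prod)
    also have "\<dots> \<subseteq> (\<Union>u\<in>pvars p. pvars (e u))"
      using m pvars_power unfolding pvars_def by fastforce
    finally show "pvars (PConst (Poly_Mapping.lookup p m) * pmon e m) \<subseteq> (\<Union>u\<in>pvars p. pvars (e u))"
      using pvars_mult[of "PConst (Poly_Mapping.lookup p m)" "pmon e m"] by auto
  qed
  finally show ?thesis .
qed

subsection \<open>Substitution of initial values\<close>

definition subenv :: "'a::comm_ring_1 vec \<Rightarrow> nat \<Rightarrow> var \<Rightarrow> 'a mpoly" where
  "subenv r0 n v = (case v of X \<Rightarrow> PVar X | Y i \<Rightarrow> (if i < n then PVar (Y i) else 0)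
      | Y0 i \<Rightarrow> PConst (vec_index r0 i) | Yd i \<Rightarrow> 0 | W \<Rightarrow> 0)"

definition psub :: "'a::comm_ring_1 vec \<Rightarrow> nat \<Rightarrow> 'a mpoly \<Rightarrow> 'a mpoly" where
  "psub r0 n p = peval PConst (subenv r0 n) p"

lemma pvars_sub: "pvars (psub r0 n p) \<subseteq> insert X (Y ` {..<n})"
proof -
  have "\<And>u. pvars (subenv r0 n u) \<subseteq> insert X (Y ` {..<n})"
    subgoal for u using pvars_PVar[of u] by (cases u) (auto simp: subenv_def)
    done
  then show ?thesis unfolding psub_def using pvars_peval by blast
qed

lemma peval_sub: assumes "comm_ring_hom f"
  shows "peval f w (psub r0 n p) = peval f (peval f w \<circ> subenv r0 n) p"
proof -
  have "peval f w (psub r0 n p) = peval (peval f w \<circ> PConst) (peval f w \<circ> subenv r0 n) p"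
    unfolding psub_def by (rule peval_compose[OF peval_hom[OF assms]])
  also have "peval f w \<circ> PConst = f" by (rule ext) (simp add: peval_PConst[OF assms])
  finally show ?thesis .
qed

definition Vn :: "nat \<Rightarrow> var set" where
  "Vn n = insert X (Y ` {..<n} \<union> Y0 ` {..<n} \<union> Yd ` {..<n})"

lemma peval_sub_senv: assumes "pvars p \<subseteq> Vn n" "dim_vec r0 = n"
  shows "peval fps_const (senv r0 s t) (psub r0 n p) = peval fps_const (senv r0 s 0) p"
  unfolding peval_sub[OF hc]
proof (rule peval_cong)
  fix u assume "u \<in> pvars p"
  with assms have "u \<in> Vn n" by auto
  then show "(peval fps_const (senv r0 s t) \<circ> subenv r0 n) u = senv r0 s 0 u"
    by (auto simp: Vn_def subenv_def senv_def peval_PVar[OF hc] peval_PConst[OF hc])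
qed

lemma peval_nth0: assumes "pvars p \<subseteq> Vn n" "\<forall>i<n. fps_nth (vec_index s i) 0 = vec_index r0 i"
  shows "fps_nth (peval fps_const (senv r0 s 0) p) 0 = peval id (kenv r0 r0) p"
proof -
  have "fps_nth (peval fps_const (senv r0 s 0) p) 0 =
     peval ((\<lambda>a. fps_nth a 0) \<circ> fps_const) ((\<lambda>a. fps_nth a 0) \<circ> senv r0 s 0) p"
    by (rule peval_compose[OF comm_ring_hom_nth0])
  also have "(\<lambda>a. fps_nth a 0) \<circ> (fps_const :: 'a \<Rightarrow> 'a fps) = id" by (rule ext) simp
  also have "peval id ((\<lambda>a. fps_nth a 0) \<circ> senv r0 s 0) p = peval id (kenv r0 r0) p"
  proof (rule peval_cong)
    fix u assume "u \<in> pvars p"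
    with assms(1) have "u \<in> Vn n" by auto
    then show "((\<lambda>a. fps_nth a 0) \<circ> senv r0 s 0) u = kenv r0 r0 u"
      using assms(2) by (auto simp: Vn_def senv_def kenv_def)
  qed
  finally show ?thesis .
qed

lemma fps_shift1_mult: "fps_shift 1 (a * b) = fps_shift 1 a * b + fps_const (fps_nth a 0) * fps_shift 1 (b::'a::comm_ring_1 fps)"
proof (rule fps_ext)
  fix n
  have "fps_nth (a * b) (Suc n) = (\<Sum>i=0..Suc n. fps_nth a i * fps_nth b (Suc n - i))"
    by (simp only: fps_mult_nth)
  also have "\<dots> = fps_nth a 0 * fps_nth b (Suc n) + (\<Sum>i=0..n. fps_nth a (Suc i) * fps_nth b (n - i))"
    by (subst sum.atLeast0_atMost_Suc_shift) simp
  finally have calc: "fps_nth (a * b) (Suc n) = fps_nth a 0 * fps_nth b (Suc n) + (\<Sum>i=0..n. fps_nth a (Suc i) * fps_nth b (n - i))" .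
  have A: "fps_nth (fps_shift 1 a * b) n = (\<Sum>i=0..n. fps_nth a (Suc i) * fps_nth b (n - i))"
    by (simp add: fps_mult_nth)
  have B: "fps_nth (fps_const (fps_nth a 0) * fps_shift 1 b) n = fps_nth a 0 * fps_nth b (Suc n)"
    by simp
  have C: "fps_nth (fps_shift 1 (a * b)) n = fps_nth (a * b) (Suc n)" by simp
  show "fps_nth (fps_shift 1 (a * b)) n = fps_nth (fps_shift 1 a * b + fps_const (fps_nth a 0) * fps_shift 1 b) n"
    unfolding fps_add_nth A B C calc by (rule add.commute)
qed

lemma fps_shift1_mult': "fps_shift (Suc 0) (a * b) = fps_shift (Suc 0) a * b + fps_const (fps_nth a 0) * fps_shift (Suc 0) (b::'a::comm_ring_1 fps)"
  using fps_shift1_mult[of a b] by simp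

lemma fps_shift1_X_mult: "fps_shift 1 (fps_X * f) = (f :: 'a::comm_ring_1 fps)"
  by (metis fps_shift_times_fps_X' mult.commute)

lemma fps_shift1_X_mult': "fps_shift (Suc 0) (fps_X * f) = (f :: 'a::comm_ring_1 fps)"
  using fps_shift1_X_mult by simp

lemma fps_shift1_const_mult: "fps_shift 1 (fps_const c * a) = fps_const c * fps_shift 1 (a::'a::comm_ring_1 fps)"
  by (rule fps_ext) simp

lemma fps_shift_sum: "fps_shift k (sum g A) = (\<Sum>a\<in>A. fps_shift k (g a))"
  by (induction A rule: infinite_finite_induct) (auto simp: fps_shift_add)

lemma set_mono_list: "k \<in> set (mono_list m) \<Longrightarrow> rvar k \<in> Poly_Mapping.keys m"
  by (auto simp: mono_list_def in_keys_iff)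

lemma inj_rvar: "inj rvar"
proof
  fix a b assume "rvar a = rvar b" then show "a = b" by (cases a; cases b) auto
qed

lemma prod_list_concat: "prod_list (concat xs) = prod_list (map prod_list xs)"
  by (induction xs) auto

lemma mono_list_prod: assumes "Poly_Mapping.keys m \<subseteq> range rvar"
  shows "prod_list (map (\<lambda>k. g (rvar k)) (mono_list m)) = pmon g m"
proof -
  define N where "N = Suc (\<Sum>u\<in>Poly_Mapping.keys m. case u of Y i \<Rightarrow> Suc i | _ \<Rightarrow> 0)"
  have "prod_list (map (\<lambda>k. g (rvar k)) (mono_list m)) =
     prod_list (map (\<lambda>k. g (rvar k) ^ Poly_Mapping.lookup m (rvar k)) [0..<N])"
    unfolding mono_list_def N_def[symmetric]
    by (simp add: map_concat prod_list_concat o_def prod_list_replicate)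
  also have "\<dots> = (\<Prod>k\<in>set [0..<N]. g (rvar k) ^ Poly_Mapping.lookup m (rvar k))"
    by (rule prod.distinct_set_conv_list[symmetric]) simp
  also have "\<dots> = (\<Prod>u\<in>rvar ` {0..<N}. g u ^ Poly_Mapping.lookup m u)"
    by (subst prod.reindex) (use inj_rvar in \<open>auto intro: inj_on_subset\<close>)
  also have "\<dots> = pmon g m"
  proof (rule mon_superset[symmetric])
    show "finite (rvar ` {0..<N})" by simp
    show "Poly_Mapping.keys m \<subseteq> rvar ` {0..<N}"
    proof
      fix u assume u: "u \<in> Poly_Mapping.keys m"
      with assms obtain k where k: "u = rvar k" by auto
      show "u \<in> rvar ` {0..<N}"
      proof (cases k)
        case 0 then show ?thesis using k by (auto simp: N_def intro!: image_eqI[where x=0])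
      next
        case (Suc i)
        then have "u = Y i" using k by simp
        have "(case u of Y i \<Rightarrow> Suc i | _ \<Rightarrow> 0) \<le> (\<Sum>u\<in>Poly_Mapping.keys m. case u of Y i \<Rightarrow> Suc i | _ \<Rightarrow> 0)"
          by (rule member_le_sum) (use u in auto)
        then have "k < N" using \<open>u = Y i\<close> Suc by (simp add: N_def)
        then show ?thesis using k by auto
      qed
    qed
  qed
  finally show ?thesis .
qed

subsection \<open>Correctness of the syntactic derivative\<close>

lemma list_mono_Cons: "list_mono (k # l) = PVar (rvar k) * list_mono l"
  by (simp add: list_mono_def)

lemma peval_list_mono: "peval fps_const e (list_mono l) = prod_list (map (\<lambda>k. e (rvar k)) l)"
  by (induction l) (auto simp: list_mono_Cons peval_mult[OF hc] peval_PVar[OF hc] peval_one[OF hc] list_mono_def)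

lemma peval_mono_deriv:
  assumes "e X = fps_X"
    and "\<forall>i. Suc i \<in> set l \<longrightarrow> e (Yd i) = fps_shift 1 (e (Y i)) \<and> e (Y0 i) = fps_const (fps_nth (e (Y i)) 0)"
  shows "peval fps_const e (mono_deriv l) = fps_shift 1 (prod_list (map (\<lambda>k. e (rvar k)) l))"
  using assms(2)
proof (induction l)
  case Nil
  then show ?case by (simp add: fps_shift_one)
next
  case (Cons k l)
  then have IH: "peval fps_const e (mono_deriv l) = fps_shift 1 (prod_list (map (\<lambda>k. e (rvar k)) l))" by auto
  show ?case
  proof (cases k)
    case 0
    then show ?thesis
      by (simp add: peval_add[OF hc] peval_mult[OF hc] peval_one[OF hc] IH peval_list_mono fps_shift1_X_mult fps_shift1_X_mult' assms(1))
  next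
    case (Suc i)
    with Cons.prems have c: "e (Yd i) = fps_shift 1 (e (Y i))" "e (Y0 i) = fps_const (fps_nth (e (Y i)) 0)" by auto
    show ?thesis using Suc
      by (simp add: peval_add[OF hc] peval_mult[OF hc] peval_PVar[OF hc] IH peval_list_mono fps_shift1_mult fps_shift1_mult' c)
  qed
qed

lemma peval_sderiv:
  assumes "pvars p \<subseteq> range rvar" "e X = fps_X"
    and "\<forall>i. Y i \<in> pvars p \<longrightarrow> e (Yd i) = fps_shift 1 (e (Y i)) \<and> e (Y0 i) = fps_const (fps_nth (e (Y i)) 0)"
  shows "peval fps_const e (sderiv p) = fps_shift 1 (peval fps_const e p)"
proof -
  have md: "peval fps_const e (mono_deriv (mono_list m)) = fps_shift 1 (pmon e m)"
    if m: "m \<in> Poly_Mapping.keys p" for m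
  proof -
    have km: "Poly_Mapping.keys m \<subseteq> pvars p" using m unfolding pvars_def by auto
    have "peval fps_const e (mono_deriv (mono_list m)) =
        fps_shift 1 (prod_list (map (\<lambda>k. e (rvar k)) (mono_list m)))"
    proof (rule peval_mono_deriv)
      show "e X = fps_X" by (rule assms(2))
      show "\<forall>i. Suc i \<in> set (mono_list m) \<longrightarrow> e (Yd i) = fps_shift 1 (e (Y i)) \<and> e (Y0 i) = fps_const (fps_nth (e (Y i)) 0)"
      proof (intro allI impI)
      fix i assume "Suc i \<in> set (mono_list m)"
      then have "Y i \<in> pvars p" using set_mono_list km by fastforce
      with assms(3) show "e (Yd i) = fps_shift 1 (e (Y i)) \<and> e (Y0 i) = fps_const (fps_nth (e (Y i)) 0)" by auto
      qed
    qed
    also have "\<dots> = fps_shift 1 (pmon e m)"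
      using mono_list_prod[of m e] km assms(1) by auto
    finally show ?thesis .
  qed
  have "peval fps_const e (sderiv p) = (\<Sum>m\<in>Poly_Mapping.keys p. fps_const (Poly_Mapping.lookup p m) * fps_shift 1 (pmon e m))"
    unfolding sderiv_def by (simp add: peval_sum[OF hc] peval_mult[OF hc] peval_PConst[OF hc] md)
  also have "\<dots> = fps_shift 1 (peval fps_const e p)"
    unfolding peval_mon fps_shift_sum fps_shift1_const_mult ..
  finally show ?thesis .
qed

definition yw :: "var \<Rightarrow> nat" where "yw u = (case u of Yd _ \<Rightarrow> 1 | _ \<Rightarrow> 0)"

definition ydeg :: "(var \<Rightarrow>\<^sub>0 nat) \<Rightarrow> nat" where
  "ydeg m = (\<Sum>u\<in>Poly_Mapping.keys m. yw u * Poly_Mapping.lookup m u)"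

lemma ydeg_superset: assumes "finite S" "Poly_Mapping.keys m \<subseteq> S"
  shows "ydeg m = (\<Sum>u\<in>S. yw u * Poly_Mapping.lookup m u)"
  unfolding ydeg_def by (rule sum.mono_neutral_left[OF assms]) (auto simp: in_keys_iff)

lemma ydeg_add: "ydeg (a + b) = ydeg a + ydeg b"
proof -
  let ?S = "Poly_Mapping.keys a \<union> Poly_Mapping.keys b"
  have f: "finite ?S" by simp
  show ?thesis
    by (simp add: ydeg_superset[OF f] keys_add_nat lookup_add distrib_left sum.distrib)
qed

lemma ydeg_zero[simp]: "ydeg 0 = 0" by (simp add: ydeg_def)

definition Dg :: "nat \<Rightarrow> 'a::comm_ring_1 mpoly \<Rightarrow> bool" where
  "Dg k q \<longleftrightarrow> (\<forall>m\<in>Poly_Mapping.keys q. ydeg m \<le> k)"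

lemma Dg_add: "Dg k p \<Longrightarrow> Dg k q \<Longrightarrow> Dg k (p + q)"
  unfolding Dg_def using keys_add[of p q] by blast

lemma Dg_mult: assumes "Dg k p" "Dg l q" shows "Dg (k + l) (p * q)"
  unfolding Dg_def
proof
  fix m assume "m \<in> Poly_Mapping.keys (p * q)"
  with keys_mult[of p q] obtain a b where "m = a + b" "a \<in> Poly_Mapping.keys p" "b \<in> Poly_Mapping.keys q" by blast
  with assms show "ydeg m \<le> k + l" unfolding Dg_def by (simp add: ydeg_add add_mono)
qed

lemma Dg_mono: "k \<le> l \<Longrightarrow> Dg k p \<Longrightarrow> Dg l p"
  unfolding Dg_def using le_trans by blast

lemma Dg_zero[simp]: "Dg k 0" unfolding Dg_def by simp
lemma Dg_one[simp]: "Dg k (1::'a::comm_ring_1 mpoly)" unfolding Dg_def by simp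
lemma Dg_PConst[simp]: "Dg k (PConst c)" unfolding Dg_def PConst_def by auto
lemma Dg_PVar: "Dg (yw u) (PVar u :: 'a::comm_ring_1 mpoly)"
  unfolding Dg_def PVar_def ydeg_def by auto

lemma Dg_sum: "(\<And>a. a \<in> A \<Longrightarrow> Dg k (g a)) \<Longrightarrow> Dg k (sum g A)"
  by (induction A rule: infinite_finite_induct) (auto intro: Dg_add)

lemma yw_rvar[simp]: "yw (rvar k) = 0" by (cases k) (auto simp: yw_def)

lemma Dg_list_mono: "Dg 0 (list_mono l :: 'a::comm_ring_1 mpoly)"
proof (induction l)
  case Nil then show ?case by (simp add: list_mono_def)
next
  case (Cons k l)
  have "Dg (0 + 0) (PVar (rvar k) * list_mono l :: 'a mpoly)"
    by (rule Dg_mult) (use Dg_PVar[of "rvar k"] Cons in auto)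
  then show ?case by (simp add: list_mono_Cons)
qed

lemma Dg_dvar: "Dg 1 (dvar k :: 'a::comm_ring_1 mpoly)"
  by (cases k) (use Dg_PVar[of "Yd _"] in \<open>auto simp: yw_def\<close>)

lemma Dg_y0var: "Dg 0 (y0var k :: 'a::comm_ring_1 mpoly)"
  by (cases k) (use Dg_PVar[of "Y0 _"] in \<open>auto simp: yw_def\<close>)

lemma Dg_mono_deriv: "Dg 1 (mono_deriv l :: 'a::comm_ring_1 mpoly)"
proof (induction l)
  case Nil then show ?case by simp
next
  case (Cons k l)
  have a: "Dg (1 + 0) (dvar k * list_mono l :: 'a mpoly)" by (rule Dg_mult[OF Dg_dvar Dg_list_mono])
  have b: "Dg (0 + 1) (y0var k * mono_deriv l :: 'a mpoly)" by (rule Dg_mult[OF Dg_y0var Cons])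
  show ?case using Dg_add[OF a[simplified] b[simplified]] by simp
qed

lemma Dg_sderiv: "Dg 1 (sderiv p)"
  unfolding sderiv_def
  by (rule Dg_sum) (use Dg_mult[OF Dg_PConst Dg_mono_deriv] in auto)

lemma pvars_list_mono: "pvars (list_mono l :: 'a::comm_ring_1 mpoly) \<subseteq> rvar ` set l"
proof (induction l)
  case Nil then show ?case by (simp add: list_mono_def)
next
  case (Cons k l)
  then show ?case using pvars_mult[of "PVar (rvar k) :: 'a mpoly" "list_mono l"] pvars_PVar[of "rvar k"]
    by (auto simp: list_mono_Cons)
qed

definition kvars :: "nat \<Rightarrow> var set" where
  "kvars k = (case k of 0 \<Rightarrow> {X} | Suc i \<Rightarrow> {Y i, Yd i, Y0 i})"

lemma pvars_mono_deriv: "pvars (mono_deriv l :: 'a::comm_ring_1 mpoly) \<subseteq> (\<Union>k\<in>set l. kvars k)"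
proof (induction l)
  case Nil then show ?case by simp
next
  case (Cons k l)
  have d: "pvars (dvar k :: 'a mpoly) \<subseteq> kvars k"
    by (cases k) (use pvars_PVar[of "Yd _"] in \<open>auto simp: kvars_def\<close>)
  have y: "pvars (y0var k :: 'a mpoly) \<subseteq> kvars k"
    by (cases k) (use pvars_PVar[of "Y0 _"] in \<open>auto simp: kvars_def\<close>)
  have r: "rvar k' \<in> kvars k'" for k' by (cases k') (auto simp: kvars_def)
  have lm: "pvars (list_mono l :: 'a mpoly) \<subseteq> (\<Union>k\<in>set l. kvars k)"
    using pvars_list_mono[of l] r by fastforce
  let ?U = "\<Union>k\<in>set l. kvars k"
  have A: "pvars (dvar k * list_mono l :: 'a mpoly) \<subseteq> kvars k \<union> ?U"
    by (rule order.trans[OF pvars_mult Un_mono[OF d lm]])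
  have B: "pvars (y0var k * mono_deriv l :: 'a mpoly) \<subseteq> kvars k \<union> ?U"
    by (rule order.trans[OF pvars_mult Un_mono[OF y Cons.IH]])
  have "pvars (mono_deriv (k # l) :: 'a mpoly) \<subseteq> (kvars k \<union> ?U) \<union> (kvars k \<union> ?U)"
    unfolding mono_deriv.simps by (rule order.trans[OF pvars_add Un_mono[OF A B]])
  then show ?case by auto
qed

lemma pvars_sderiv: assumes "pvars p \<subseteq> insert X (Y ` {..<n})"
  shows "pvars (sderiv p) \<subseteq> Vn n"
proof -
  have "pvars (sderiv p) \<subseteq> (\<Union>m\<in>Poly_Mapping.keys p. pvars (PConst (Poly_Mapping.lookup p m) * mono_deriv (mono_list m)))"
    unfolding sderiv_def by (rule pvars_sum)
  also have "\<dots> \<subseteq> Vn n"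
  proof (rule UN_least)
    fix m assume m: "m \<in> Poly_Mapping.keys p"
    have "pvars (mono_deriv (mono_list m) :: 'a mpoly) \<subseteq> Vn n"
    proof -
      have "kvars k \<subseteq> Vn n" if "k \<in> set (mono_list m)" for k
      proof -
        have "rvar k \<in> pvars p" using set_mono_list[OF that] m unfolding pvars_def by auto
        with assms show ?thesis by (cases k) (auto simp: kvars_def Vn_def)
      qed
      then show ?thesis using pvars_mono_deriv[of "mono_list m"] by blast
    qed
    then show "pvars (PConst (Poly_Mapping.lookup p m) * mono_deriv (mono_list m)) \<subseteq> Vn n"
      using pvars_mult[of "PConst (Poly_Mapping.lookup p m)" "mono_deriv (mono_list m)"] by auto
  qed
  finally show ?thesis .
qed

lemma keys_minus_nat: "Poly_Mapping.keys (m - x :: var \<Rightarrow>\<^sub>0 nat) \<subseteq> Poly_Mapping.keys m"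
  by (auto simp: in_keys_iff lookup_minus)

lemma pvars_if_single: "Poly_Mapping.keys m' \<subseteq> S \<Longrightarrow> pvars (if b then Poly_Mapping.single m' c else 0) \<subseteq> S"
  using pvars_single[of m' c] by auto

lemma pvars_dpart: "pvars (dpart j q) \<subseteq> pvars q"
  unfolding dpart_def
proof (rule order.trans[OF pvars_sum], rule UN_least)
  fix m assume m: "m \<in> Poly_Mapping.keys q"
  have "Poly_Mapping.keys m \<subseteq> pvars q" using m unfolding pvars_def by blast
  then have k: "Poly_Mapping.keys (m - x) \<subseteq> pvars q" for x using keys_minus_nat[of m x] by blast
  show "pvars (if (\<forall>i. Poly_Mapping.lookup m (Yd i) = (if j = Some i then 1 else 0))
      then Poly_Mapping.single (m - (case j of None \<Rightarrow> 0 | Some i \<Rightarrow> Poly_Mapping.single (Yd i) 1))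
               (Poly_Mapping.lookup q m)
      else 0) \<subseteq> pvars q"
    by (rule pvars_if_single[OF k])
qed

lemma pvars_eth_x: "pvars p \<subseteq> insert X (Y ` {..<n}) \<Longrightarrow> pvars (eth_x p) \<subseteq> Vn n"
  unfolding eth_x_def using pvars_dpart pvars_sderiv by blast

lemma pvars_eth_y: "pvars p \<subseteq> insert X (Y ` {..<n}) \<Longrightarrow> pvars (eth_y j p) \<subseteq> Vn n"
  unfolding eth_y_def using pvars_dpart pvars_sderiv by blast

definition condJ :: "nat option \<Rightarrow> (var \<Rightarrow>\<^sub>0 nat) \<Rightarrow> bool" where
  "condJ j m \<longleftrightarrow> (\<forall>i. Poly_Mapping.lookup m (Yd i) = (if j = Some i then 1 else 0))"

definition subJ :: "nat option \<Rightarrow> (var \<Rightarrow>\<^sub>0 nat)" where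
  "subJ j = (case j of None \<Rightarrow> 0 | Some i \<Rightarrow> Poly_Mapping.single (Yd i) 1)"

lemma peval_dpart: assumes "comm_ring_hom f"
  shows "peval f e (dpart j q) = (\<Sum>m\<in>Poly_Mapping.keys q.
     (if condJ j m then f (Poly_Mapping.lookup q m) * pmon e (m - subJ j) else 0))"
proof -
  interpret comm_ring_hom f by fact
  show ?thesis
    unfolding dpart_def condJ_def[symmetric] subJ_def[symmetric] peval_sum[OF assms]
    by (rule sum.cong) (auto simp: peval_single)
qed

lemma ydeg_two: assumes "i \<noteq> j"
  shows "Poly_Mapping.lookup m (Yd i) + Poly_Mapping.lookup m (Yd j) \<le> ydeg m"
proof -
  let ?S = "Poly_Mapping.keys m \<union> {Yd i, Yd j}"
  have f: "finite ?S" by simp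
  have "Poly_Mapping.lookup m (Yd i) + Poly_Mapping.lookup m (Yd j) = (\<Sum>u\<in>{Yd i, Yd j}. yw u * Poly_Mapping.lookup m u)"
    using assms by (simp add: yw_def)
  also have "\<dots> \<le> (\<Sum>u\<in>?S. yw u * Poly_Mapping.lookup m u)"
    by (rule sum_mono2[OF f]) auto
  also have "\<dots> = ydeg m" by (rule ydeg_superset[symmetric, OF f]) auto
  finally show ?thesis .
qed

lemma ydeg_one: "Poly_Mapping.lookup m (Yd i) \<le> ydeg m"
proof -
  let ?S = "Poly_Mapping.keys m \<union> {Yd i}"
  have f: "finite ?S" by simp
  have "Poly_Mapping.lookup m (Yd i) = (\<Sum>u\<in>{Yd i}. yw u * Poly_Mapping.lookup m u)"
    by (simp add: yw_def)
  also have "\<dots> \<le> (\<Sum>u\<in>?S. yw u * Poly_Mapping.lookup m u)"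
    by (rule sum_mono2[OF f]) auto
  also have "\<dots> = ydeg m" by (rule ydeg_superset[symmetric, OF f]) auto
  finally show ?thesis .
qed

lemma mono_case:
  assumes f: "comm_ring_hom f" and d: "ydeg m \<le> 1" and jn: "\<forall>j. Yd j \<in> Poly_Mapping.keys m \<longrightarrow> j < n"
    and e0: "\<forall>u. e0 u = (case u of Yd _ \<Rightarrow> 0 | _ \<Rightarrow> e u)"
  shows "f c * pmon e m = (if condJ None m then f c * pmon e0 (m - subJ None) else 0)
     + (\<Sum>j<n. (if condJ (Some j) m then f c * pmon e0 (m - subJ (Some j)) else 0) * e (Yd j))"
proof (cases "\<forall>i. Poly_Mapping.lookup m (Yd i) = 0")
  case True
  have c0: "condJ None m" using True by (simp add: condJ_def)
  have c1: "\<not> condJ (Some j) m" for j using True by (auto simp: condJ_def)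
  have "pmon e m = pmon e0 m"
  proof (rule mon_cong)
    fix u assume u: "u \<in> Poly_Mapping.keys m"
    show "e u = e0 u" using u True e0 by (cases u) (auto simp: in_keys_iff)
  qed
  then show ?thesis using c0 c1 by (simp add: subJ_def)
next
  case False
  then obtain j where j: "Poly_Mapping.lookup m (Yd j) \<noteq> 0" by auto
  have j1: "Poly_Mapping.lookup m (Yd j) = 1" using j ydeg_one[of m j] d by linarith
  have oth: "Poly_Mapping.lookup m (Yd i) = 0" if "i \<noteq> j" for i
    using ydeg_two[OF that, of m] j1 d by linarith
  have jlt: "j < n" using jn j by (simp add: in_keys_iff)
  have c0: "\<not> condJ None m" using j by (auto simp: condJ_def)
  have c1: "condJ (Some i) m \<longleftrightarrow> i = j" for i
    using j1 oth by (auto simp: condJ_def)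
  define m' where "m' = m - Poly_Mapping.single (Yd j) 1"
  have m'0: "Poly_Mapping.lookup m' (Yd i) = 0" for i
    using j1 oth unfolding m'_def by (cases "i = j") (auto simp: lookup_minus lookup_single)
  have mm: "m = m' + Poly_Mapping.single (Yd j) 1"
    by (rule poly_mapping_eqI) (use j1 in \<open>auto simp: m'_def lookup_add lookup_minus lookup_single when_def\<close>)
  have me: "pmon e m' = pmon e0 m'"
  proof (rule mon_cong)
    fix u assume u: "u \<in> Poly_Mapping.keys m'"
    show "e u = e0 u" using u m'0 e0 by (cases u) (auto simp: in_keys_iff)
  qed
  have "(\<Sum>i<n. (if condJ (Some i) m then f c * pmon e0 (m - subJ (Some i)) else 0) * e (Yd i))
      = (\<Sum>i<n. if i = j then f c * pmon e0 m' * e (Yd j) else 0)"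
    by (rule sum.cong) (auto simp: c1 subJ_def m'_def)
  also have "\<dots> = f c * pmon e0 m' * e (Yd j)" using jlt by simp
  finally show ?thesis using c0 me
    by (subst mm) (simp add: mon_add)
qed

lemma peval_dpart_decomp:
  assumes f: "comm_ring_hom f" and dg: "Dg 1 q" and jn: "\<forall>j. Yd j \<in> pvars q \<longrightarrow> j < n"
    and e0: "\<forall>u. e0 u = (case u of Yd _ \<Rightarrow> 0 | _ \<Rightarrow> e u)"
  shows "peval f e q = peval f e0 (dpart None q) + (\<Sum>j<n. peval f e0 (dpart (Some j) q) * e (Yd j))"
proof -
  let ?K = "Poly_Mapping.keys q"
  let ?c = "\<lambda>m. f (Poly_Mapping.lookup q m)"
  have "peval f e q = (\<Sum>m\<in>?K. ?c m * pmon e m)" by (rule peval_mon)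
  also have "\<dots> = (\<Sum>m\<in>?K. (if condJ None m then ?c m * pmon e0 (m - subJ None) else 0)
     + (\<Sum>j<n. (if condJ (Some j) m then ?c m * pmon e0 (m - subJ (Some j)) else 0) * e (Yd j)))"
  proof (rule sum.cong[OF refl])
    fix m assume m: "m \<in> ?K"
    show "?c m * pmon e m = (if condJ None m then ?c m * pmon e0 (m - subJ None) else 0)
     + (\<Sum>j<n. (if condJ (Some j) m then ?c m * pmon e0 (m - subJ (Some j)) else 0) * e (Yd j))"
    proof (rule mono_case[OF f _ _ e0])
      show "ydeg m \<le> 1" using dg m unfolding Dg_def by auto
      show "\<forall>j. Yd j \<in> Poly_Mapping.keys m \<longrightarrow> j < n" using jn m unfolding pvars_def by auto
    qed
  qed
  also have "\<dots> = peval f e0 (dpart None q) + (\<Sum>j<n. peval f e0 (dpart (Some j) q) * e (Yd j))"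
    unfolding peval_dpart[OF f] sum.distrib sum_distrib_right
    by (subst sum.swap) (rule refl)
  finally show ?thesis .
qed

lemma stream_deriv:
  assumes p: "pvars p \<subseteq> insert X (Y ` {..<n})" and s0: "\<forall>i<n. fps_nth (vec_index s i) 0 = vec_index r0 i"
  shows "fps_shift 1 (peval fps_const (senv r0 s t) p) = peval fps_const (senv r0 s 0) (eth_x p)
     + (\<Sum>j<n. peval fps_const (senv r0 s 0) (eth_y j p) * fps_shift 1 (vec_index s j))"
proof -
  define e where "e u = (case u of Yd i \<Rightarrow> fps_shift 1 (vec_index s i) | _ \<Rightarrow> senv r0 s 0 u)" for u
  have 1: "peval fps_const (senv r0 s t) p = peval fps_const e p"
  proof (rule peval_cong)
    fix u assume "u \<in> pvars p" with p show "senv r0 s t u = e u" by (auto simp: e_def senv_def)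
  qed
  have 2: "peval fps_const e (sderiv p) = fps_shift 1 (peval fps_const e p)"
  proof (rule peval_sderiv)
    show "pvars p \<subseteq> range rvar"
    proof
      fix u assume "u \<in> pvars p"
      with p have "u = X \<or> (\<exists>i. u = Y i)" by auto
      then show "u \<in> range rvar" by (metis rangeI rvar.simps)
    qed
    show "e X = fps_X" by (simp add: e_def senv_def)
    show "\<forall>i. Y i \<in> pvars p \<longrightarrow> e (Yd i) = fps_shift 1 (e (Y i)) \<and> e (Y0 i) = fps_const (fps_nth (e (Y i)) 0)"
      using p s0 by (auto simp: e_def senv_def)
  qed
  have 3: "peval fps_const e (sderiv p) = peval fps_const (senv r0 s 0) (dpart None (sderiv p))
     + (\<Sum>j<n. peval fps_const (senv r0 s 0) (dpart (Some j) (sderiv p)) * e (Yd j))"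
  proof (rule peval_dpart_decomp[OF hc Dg_sderiv])
    show "\<forall>j. Yd j \<in> pvars (sderiv p) \<longrightarrow> j < n" using pvars_sderiv[OF p] by (auto simp: Vn_def)
    show "\<forall>u. senv r0 s 0 u = (case u of Yd _ \<Rightarrow> 0 | _ \<Rightarrow> e u)"
      by (auto simp: e_def senv_def split: var.split)
  qed
  show ?thesis using 1 2 3 by (simp add: e_def eth_x_def eth_y_def)
qed

subsection \<open>Truncated equality of streams\<close>

definition eqk :: "nat \<Rightarrow> 'a fps \<Rightarrow> 'a fps \<Rightarrow> bool" where
  "eqk k a b \<longleftrightarrow> (\<forall>i\<le>k. fps_nth a i = fps_nth b i)"

lemma eqk_refl[simp]: "eqk k a a" by (simp add: eqk_def)

lemma eqk_add: "eqk k a b \<Longrightarrow> eqk k c d \<Longrightarrow> eqk k (a + c) (b + d)"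
  by (simp add: eqk_def)

lemma eqk_mult: assumes "eqk k a b" "eqk k c d" shows "eqk k (a * c) (b * (d::'a::comm_ring_1 fps))"
  unfolding eqk_def
proof (intro allI impI)
  fix i assume i: "i \<le> k"
  show "fps_nth (a * c) i = fps_nth (b * d) i"
    unfolding fps_mult_nth by (rule sum.cong) (use assms i in \<open>auto simp: eqk_def\<close>)
qed

lemma eqk_sum: "(\<And>x. x \<in> A \<Longrightarrow> eqk k (f x) (g x)) \<Longrightarrow> eqk k (sum f A) (sum g A)"
  by (induction A rule: infinite_finite_induct) (auto intro: eqk_add)

lemma eqk_prod: "(\<And>x. x \<in> A \<Longrightarrow> eqk k (f x) (g x)) \<Longrightarrow> eqk k (prod f A) (prod g A :: 'a::comm_ring_1 fps)"
  by (induction A rule: infinite_finite_induct) (auto intro: eqk_mult)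

lemma eqk_power: "eqk k a b \<Longrightarrow> eqk k (a ^ m) (b ^ m :: 'a::comm_ring_1 fps)"
  by (induction m) (auto intro: eqk_mult)

lemma eqk_peval: assumes "\<And>u. eqk k (e1 u) (e2 u)"
  shows "eqk k (peval fps_const e1 p) (peval fps_const e2 p)"
  unfolding peval_def
  by (intro eqk_sum eqk_mult eqk_prod eqk_power assms eqk_refl)

lemma eqk_mono: "eqk k a b \<Longrightarrow> j \<le> k \<Longrightarrow> eqk j a b" by (simp add: eqk_def)
lemma eqk_trans: "eqk k a b \<Longrightarrow> eqk k b c \<Longrightarrow> eqk k a c" by (simp add: eqk_def)
lemma eqk_sym: "eqk k a b \<Longrightarrow> eqk k b a" by (simp add: eqk_def)

lemma eqk_X: assumes "eqk k a b"
  shows "eqk (Suc k) (fps_const x + fps_X * a) (fps_const x + fps_X * (b::'a::comm_ring_1 fps))"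
  using assms unfolding eqk_def by auto

lemma vec_index_undef: "n \<le> i \<Longrightarrow> vec_index (vec n f) i = undef_vec (i - n)"
  by transfer (simp add: mk_vec_def)

lemma vec_index_vec_cases: "vec_index (vec n f) i = (if i < n then f i else undef_vec (i - n))"
  by (simp add: vec_index_undef)

definition genv :: "'a::comm_ring_1 vec \<Rightarrow> nat \<Rightarrow> (nat \<Rightarrow> 'a fps) \<Rightarrow> var \<Rightarrow> 'a fps" where
  "genv r0 n g = senv r0 (vec n g) (g n)"

lemma eqk_genv: assumes "\<forall>i\<le>n. eqk k (g i) (h i)"
  shows "eqk k (genv r0 n g u) (genv r0 n h u)"
  using assms by (cases u) (auto simp: genv_def senv_def vec_index_vec_cases)

definition Fv :: "'a::comm_ring_1 mpoly vec \<Rightarrow> 'a vec \<Rightarrow> nat \<Rightarrow> (nat \<Rightarrow> 'a fps) \<Rightarrow> nat \<Rightarrow> 'a fps" where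
  "Fv P r0 n g i = peval fps_const (genv r0 n g) (vec_index P i)"

lemma eqk_Fv: "\<forall>i\<le>n. eqk k (g i) (h i) \<Longrightarrow> eqk k (Fv P r0 n g i) (Fv P r0 n h i)"
  unfolding Fv_def by (rule eqk_peval) (rule eqk_genv)

definition ivinit :: "'a vec \<Rightarrow> 'a \<Rightarrow> nat \<Rightarrow> 'a" where
  "ivinit r0 c i = (if i < dim_vec r0 then vec_index r0 i else c)"

fun itr :: "'a::comm_ring_1 mpoly vec \<Rightarrow> 'a vec \<Rightarrow> 'a \<Rightarrow> nat \<Rightarrow> nat \<Rightarrow> 'a fps" where
  "itr P r0 c 0 i = fps_const (ivinit r0 c i)"
| "itr P r0 c (Suc m) i = fps_const (ivinit r0 c i) + fps_X * Fv P r0 (dim_vec r0) (itr P r0 c m) i"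

lemma itr_step: "\<forall>i\<le>dim_vec r0. eqk m (itr P r0 c (Suc m) i) (itr P r0 c m i)"
proof (induction m)
  case 0
  then show ?case by (simp add: eqk_def)
next
  case (Suc m)
  show ?case
  proof (intro allI impI)
    fix i assume "i \<le> dim_vec r0"
    have "eqk m (Fv P r0 (dim_vec r0) (itr P r0 c (Suc m)) i) (Fv P r0 (dim_vec r0) (itr P r0 c m) i)"
      by (rule eqk_Fv[OF Suc])
    then show "eqk (Suc m) (itr P r0 c (Suc (Suc m)) i) (itr P r0 c (Suc m) i)"
      by (simp only: itr.simps) (rule eqk_X)
  qed
qed

lemma itr_mono: "m \<le> m' \<Longrightarrow> i \<le> dim_vec r0 \<Longrightarrow> eqk m (itr P r0 c m' i) (itr P r0 c m i)"
proof (induction m' rule: dec_induct)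
  case base then show ?case by simp
next
  case (step q)
  have "eqk m (itr P r0 c (Suc q) i) (itr P r0 c q i)"
    using itr_step[of r0 q P c] step eqk_mono by blast
  then show ?case using step eqk_trans by blast
qed

definition ivlim :: "'a::comm_ring_1 mpoly vec \<Rightarrow> 'a vec \<Rightarrow> 'a \<Rightarrow> nat \<Rightarrow> 'a fps" where
  "ivlim P r0 c i = Abs_fps (\<lambda>k. fps_nth (itr P r0 c k i) k)"

lemma lim_eqk: "i \<le> dim_vec r0 \<Longrightarrow> eqk m (ivlim P r0 c i) (itr P r0 c m i)"
  unfolding eqk_def ivlim_def
proof (intro allI impI)
  fix k assume "i \<le> dim_vec r0" "k \<le> m"
  then have "eqk k (itr P r0 c m i) (itr P r0 c k i)" by (rule itr_mono[rotated])
  then show "fps_nth (Abs_fps (\<lambda>k. fps_nth (itr P r0 c k i) k)) k = fps_nth (itr P r0 c m i) k"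
    by (simp add: eqk_def)
qed

lemma lim_eq: assumes "i \<le> dim_vec r0"
  shows "ivlim P r0 c i = fps_const (ivinit r0 c i) + fps_X * Fv P r0 (dim_vec r0) (ivlim P r0 c) i"
proof (rule fps_ext)
  fix k
  show "fps_nth (ivlim P r0 c i) k = fps_nth (fps_const (ivinit r0 c i) + fps_X * Fv P r0 (dim_vec r0) (ivlim P r0 c) i) k"
  proof (cases k)
    case 0
    then show ?thesis by (simp add: ivlim_def)
  next
    case (Suc k')
    have "eqk k' (Fv P r0 (dim_vec r0) (ivlim P r0 c) i) (Fv P r0 (dim_vec r0) (itr P r0 c k') i)"
      by (rule eqk_Fv) (auto intro: lim_eqk)
    then show ?thesis using Suc by (simp add: ivlim_def eqk_def)
  qed
qed

lemma shift_const_X: "fps_shift 1 (fps_const x + fps_X * a) = (a::'a::comm_ring_1 fps)"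
  by (rule fps_ext) simp

lemma shift_const_X': "fps_shift (Suc 0) (fps_const x + fps_X * a) = (a::'a::comm_ring_1 fps)"
  by (rule fps_ext) simp

lemma ivp_exists_unique:
  fixes P :: "'a::comm_ring_1 mpoly vec" and r0 :: "'a vec"
  shows "\<exists>s t. ivp_solution P r0 c s t \<and> (\<forall>s' t'. ivp_solution P r0 c s' t' \<longrightarrow> s' = s \<and> t' = t)"
proof -
  let ?n = "dim_vec r0"
  define G where "G = ivlim P r0 c"
  let ?s = "vec ?n G" and ?t = "G ?n"
  have env: "genv r0 ?n G = senv r0 ?s ?t" by (simp add: genv_def)
  have sol: "ivp_solution P r0 c ?s ?t"
    unfolding ivp_solution_def
  proof (intro conjI allI impI)
    show "?s \<in> carrier_vec ?n" by simp
    fix i assume i: "i < ?n"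
    have "G i = fps_const (ivinit r0 c i) + fps_X * Fv P r0 ?n G i"
      unfolding G_def by (rule lim_eq) (use i in auto)
    then show "fps_shift 1 (vec_index ?s i) = peval fps_const (senv r0 ?s ?t) (vec_index P i)"
      "fps_nth (vec_index ?s i) 0 = vec_index r0 i"
      using i by (simp_all add: Fv_def env shift_const_X shift_const_X' ivinit_def)
  next
    define Q where "Q = peval fps_const (senv r0 ?s ?t) (vec_index P ?n)"
    have eq: "G ?n = fps_const c + fps_X * Q"
      unfolding Q_def env[symmetric] Fv_def[symmetric] using lim_eq[of ?n r0 P c]
      by (simp add: G_def ivinit_def)
    show "fps_shift 1 ?t = peval fps_const (senv r0 ?s ?t) (vec_index P ?n)"
      unfolding Q_def[symmetric] by (subst eq) (rule shift_const_X)
    show "fps_nth ?t 0 = c" by (subst eq) simp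
  qed
  have uniq: "s' = s'' \<and> t' = t''" if a: "ivp_solution P r0 c s' t'" and b: "ivp_solution P r0 c s'' t''" for s' t' s'' t''
  proof -
    define g where "g i = (if i < ?n then vec_index s' i else t')" for i
    define h where "h i = (if i < ?n then vec_index s'' i else t'')" for i
    have vs: "vec ?n g = s'" "vec ?n h = s''" using a b
      by (auto simp: ivp_solution_def g_def h_def intro!: eq_vecI)
    have eg: "genv r0 ?n g = senv r0 s' t'" "genv r0 ?n h = senv r0 s'' t''"
      using vs by (auto simp: genv_def g_def h_def)
    have dg: "fps_shift 1 (g i) = Fv P r0 ?n g i \<and> fps_nth (g i) 0 = ivinit r0 c i" if "i \<le> ?n" for i
      using a that by (cases "i < ?n") (auto simp: g_def ivp_solution_def Fv_def eg ivinit_def)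
    have dh: "fps_shift 1 (h i) = Fv P r0 ?n h i \<and> fps_nth (h i) 0 = ivinit r0 c i" if "i \<le> ?n" for i
      using b that by (cases "i < ?n") (auto simp: h_def ivp_solution_def Fv_def eg ivinit_def)
    have "\<forall>i\<le>?n. eqk k (g i) (h i)" for k
    proof (induction k)
      case 0 then show ?case using dg dh by (simp add: eqk_def)
    next
      case (Suc k)
      show ?case
      proof (intro allI impI)
        fix i assume i: "i \<le> ?n"
        have e: "eqk k (Fv P r0 ?n g i) (Fv P r0 ?n h i)" by (rule eqk_Fv[OF Suc])
        show "eqk (Suc k) (g i) (h i)"
          unfolding eqk_def
        proof (intro allI impI)
          fix j assume j: "j \<le> Suc k"
          show "fps_nth (g i) j = fps_nth (h i) j"
          proof (cases j)
            case 0 then show ?thesis using dg[OF i] dh[OF i] by simp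
          next
            case (Suc j')
            have "fps_nth (g i) j = fps_nth (fps_shift 1 (g i)) j'" using Suc by simp
            also have "\<dots> = fps_nth (fps_shift 1 (h i)) j'"
              using dg[OF i] dh[OF i] e Suc j by (simp add: eqk_def)
            also have "\<dots> = fps_nth (h i) j" using Suc by simp
            finally show ?thesis .
          qed
        qed
      qed
    qed
    then have gh: "g i = h i" if "i \<le> ?n" for i
      using that by (intro fps_ext) (auto simp: eqk_def)
    have "s' = s''" using vs gh by (metis eq_vecI dim_vec index_vec less_imp_le_nat)
    moreover have "t' = t''" using gh[of ?n] by (simp add: g_def h_def)
    ultimately show ?thesis by simp
  qed
  show ?thesis using sol uniq by blast
qed

lemma hom_mat_delete: "map_mat h (mat_delete A i j) = mat_delete (map_mat h A) i j"
  by (rule eq_matI) (auto simp: mat_delete_def)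

lemma hom_adj: assumes "comm_ring_hom h"
  shows "map_mat h (adj_mat A) = adj_mat (map_mat h A)"
proof -
  interpret comm_ring_hom h by fact
  show ?thesis
    by (rule eq_matI) (auto simp: adj_mat_def cofactor_def hom_mult hom_power hom_uminus hom_mat_delete[symmetric])
qed

lemma mat_mult_sum: assumes "A \<in> carrier_mat n n" "B \<in> carrier_mat n n" "i < n" "k < n"
  shows "(A * B) $$ (i,k) = (\<Sum>j<n. A $$ (i,j) * B $$ (j,k))"
  using assms by (simp add: scalar_prod_def atLeast0LessThan)

lemma mat_solve: assumes "\<forall>i<n. \<forall>k<n. (\<Sum>j<n. M $$ (i,j) * N $$ (j,k)) = (if i = k then c else 0)"
  and "i < n"
  shows "(\<Sum>j<n. M $$ (i,j) * (\<Sum>k<n. N $$ (j,k) * v k)) = c * (v i :: 'a::comm_ring_1)"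
proof -
  have "(\<Sum>j<n. M $$ (i,j) * (\<Sum>k<n. N $$ (j,k) * v k)) = (\<Sum>k<n. (\<Sum>j<n. M $$ (i,j) * N $$ (j,k)) * v k)"
    by (simp add: sum_distrib_left sum_distrib_right mult.assoc) (rule sum.swap)
  also have "\<dots> = (\<Sum>k<n. (if i = k then c * v k else 0))"
    by (rule sum.cong) (use assms in auto)
  also have "\<dots> = c * v i" using assms(2) by simp
  finally show ?thesis .
qed

lemma adj_solve1: assumes "A \<in> carrier_mat n n" "i < n"
  shows "(\<Sum>j<n. A $$ (i,j) * (\<Sum>k<n. adj_mat A $$ (j,k) * v k)) = det A * v i"
proof (rule mat_solve[OF _ assms(2)], intro allI impI)
  fix i k assume "i < n" "k < n"
  then have "(\<Sum>j<n. A $$ (i,j) * adj_mat A $$ (j,k)) = det A * (if i = k then 1 else 0)"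
    using mat_mult_sum[OF assms(1) adj_mat(1)[OF assms(1)], of i k] adj_mat(2)[OF assms(1)] by simp
  then show "(\<Sum>j<n. A $$ (i,j) * adj_mat A $$ (j,k)) = (if i = k then det A else 0)" by simp
qed

lemma adj_solve2: assumes "A \<in> carrier_mat n n" "i < n"
  shows "(\<Sum>j<n. adj_mat A $$ (i,j) * (\<Sum>k<n. A $$ (j,k) * v k)) = det A * v i"
proof (rule mat_solve[OF _ assms(2)], intro allI impI)
  fix i k assume "i < n" "k < n"
  then have "(\<Sum>j<n. adj_mat A $$ (i,j) * A $$ (j,k)) = det A * (if i = k then 1 else 0)"
    using mat_mult_sum[OF adj_mat(1)[OF assms(1)] assms(1), of i k] adj_mat(3)[OF assms(1)] by simp
  then show "(\<Sum>j<n. adj_mat A $$ (i,j) * A $$ (j,k)) = (if i = k then det A else 0)" by simp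
qed

lemma inv_solve: assumes "N \<in> carrier_mat n n" "A \<in> carrier_mat n n" "N * A = 1\<^sub>m n" "i < n"
  shows "(\<Sum>j<n. N $$ (i,j) * (\<Sum>k<n. A $$ (j,k) * v k)) = (v i :: 'a::comm_ring_1)"
  using mat_solve[of n N A 1 i v] mat_mult_sum[OF assms(1,2)] assms by simp

lemma fps_zero_shift: assumes "fps_shift 1 u = a * u" "fps_nth u 0 = 0"
  shows "u = (0::'a::comm_ring_1 fps)"
proof -
  have "\<forall>j\<le>m. fps_nth u j = 0" for m
  proof (induction m)
    case 0 then show ?case using assms(2) by simp
  next
    case (Suc m)
    have "fps_nth u (Suc m) = fps_nth (a * u) m" using arg_cong[OF assms(1), of "\<lambda>f. fps_nth f m"] by simp
    also have "\<dots> = 0" unfolding fps_mult_nth by (rule sum.neutral) (use Suc in auto)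
    finally show ?case using Suc le_Suc_eq by auto
  qed
  then show ?thesis by (intro fps_ext) auto
qed

lemma fps_zero_shift0: "fps_shift 1 u = 0 \<Longrightarrow> fps_nth u 0 = 0 \<Longrightarrow> u = (0::'a::comm_ring_1 fps)"
  using fps_zero_shift[of u 0] by simp

subsection \<open>The construction\<close>

locale setting =
  fixes E :: "'a::field_char_0 mpoly vec" and r0 :: "'a vec" and n :: nat
  assumes dE: "dim_vec E = n" and dr: "dim_vec r0 = n"
    and pv: "\<forall>i<n. pvars (vec_index E i) \<subseteq> insert X (Y ` {..<n})"
begin

definition Jp where "Jp = mat n n (\<lambda>(i,j). psub r0 n (eth_y j (vec_index E i)))"
definition Qp where "Qp j = psub r0 n (eth_x (vec_index E j))"
definition Dp where "Dp = det Jp"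
definition d0 where "d0 = det (jac_const E r0)"
definition Pi where "Pi i = - (PVar W * (\<Sum>j<n. adj_mat Jp $$ (i,j) * Qp j))"
definition Pn where "Pn = - (PConst (inverse d0) * PVar W *
   (psub r0 n (eth_x Dp) + (\<Sum>j<n. psub r0 n (eth_y j Dp) * Pi j)))"
definition Pv where "Pv = vec (Suc n) (\<lambda>i. if i < n then Pi i else Pn)"

lemma Jp_carrier: "Jp \<in> carrier_mat n n" by (simp add: Jp_def)
lemma Jp_dim[simp]: "dim_row Jp = n" "dim_col Jp = n" by (simp_all add: Jp_def)

lemma pvars_Jp: "i < n \<Longrightarrow> j < n \<Longrightarrow> pvars (Jp $$ (i,j)) \<subseteq> insert X (Y ` {..<n})"
  by (simp add: Jp_def pvars_sub)

lemma pvars_Dp: "pvars Dp \<subseteq> insert X (Y ` {..<n})"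
  unfolding Dp_def by (rule pvars_det[OF Jp_carrier pvars_Jp])

lemma pvars_adj: assumes "i < n" "j < n" shows "pvars (adj_mat Jp $$ (i,j)) \<subseteq> insert X (Y ` {..<n})"
proof -
  have c: "mat_delete Jp j i \<in> carrier_mat (n-1) (n-1)" by (rule mat_delete_carrier[OF Jp_carrier])
  have "pvars (det (mat_delete Jp j i)) \<subseteq> insert X (Y ` {..<n})"
  proof (rule pvars_det[OF c])
    fix a b assume "a < n - 1" "b < n - 1"
    moreover have "mat_delete Jp j i $$ (a,b) = Jp $$ (if a < j then a else Suc a, if b < i then b else Suc b)"
      using \<open>a < n - 1\<close> \<open>b < n - 1\<close> by (simp add: mat_delete_def)
    moreover have "(if a < j then a else Suc a) < n" "(if b < i then b else Suc b) < n"
      using \<open>a < n - 1\<close> \<open>b < n - 1\<close> by auto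
    ultimately show "pvars (mat_delete Jp j i $$ (a, b)) \<subseteq> insert X (Y ` {..<n})"
      by (metis pvars_Jp)
  qed
  moreover have "pvars ((-1::'a mpoly) ^ (j + i)) = {}"
    using pvars_power[of "-1::'a mpoly" "j+i"] by simp
  ultimately show ?thesis using assms pvars_mult[of "(-1::'a mpoly) ^ (j + i)" "det (mat_delete Jp j i)"]
    by (auto simp: adj_mat_def cofactor_def)
qed

lemma pvars_Pi: assumes "i < n" shows "pvars (Pi i) \<subseteq> {X, W} \<union> Y ` {..<n}"
proof -
  have "pvars (adj_mat Jp $$ (i,j) * Qp j) \<subseteq> {X, W} \<union> Y ` {..<n}" if "j \<in> {..<n}" for j
    using pvars_mult[of "adj_mat Jp $$ (i,j)" "Qp j"] pvars_adj[OF assms, of j] that pvars_sub[of r0 n]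
    by (auto simp: Qp_def)
  then have "pvars (\<Sum>j<n. adj_mat Jp $$ (i,j) * Qp j) \<subseteq> {X, W} \<union> Y ` {..<n}"
    using pvars_sum[of "\<lambda>j. adj_mat Jp $$ (i,j) * Qp j" "{..<n}"] by blast
  then show ?thesis unfolding Pi_def
    using pvars_mult[of "PVar W" "\<Sum>j<n. adj_mat Jp $$ (i,j) * Qp j"] pvars_PVar[of W] by auto
qed

lemma pvars_Pn: "pvars Pn \<subseteq> {X, W} \<union> Y ` {..<n}"
proof -
  let ?V = "{X, W} \<union> Y ` {..<n}"
  have "pvars (psub r0 n (eth_y j Dp) * Pi j) \<subseteq> ?V" if "j \<in> {..<n}" for j
    using pvars_mult[of "psub r0 n (eth_y j Dp)" "Pi j"] pvars_Pi[of j] that pvars_sub[of r0 n] by auto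
  then have s: "pvars (\<Sum>j<n. psub r0 n (eth_y j Dp) * Pi j) \<subseteq> ?V"
    using pvars_sum[of "\<lambda>j. psub r0 n (eth_y j Dp) * Pi j" "{..<n}"] by blast
  have a: "pvars (psub r0 n (eth_x Dp) + (\<Sum>j<n. psub r0 n (eth_y j Dp) * Pi j)) \<subseteq> ?V"
    using pvars_add[of "psub r0 n (eth_x Dp)" "\<Sum>j<n. psub r0 n (eth_y j Dp) * Pi j"] s pvars_sub[of r0 n] by auto
  have b: "pvars (PConst (inverse d0) * PVar W :: 'a mpoly) \<subseteq> ?V"
    using pvars_mult[of "PConst (inverse d0)" "PVar W :: 'a mpoly"] pvars_PVar[of W] by auto
  show ?thesis unfolding Pn_def using pvars_mult[of "PConst (inverse d0) * PVar W"] a b by fastforce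
qed

lemma pvars_Pv: "i \<le> n \<Longrightarrow> pvars (vec_index Pv i) \<subseteq> {X, W} \<union> Y ` {..<n}"
  using pvars_Pi pvars_Pn by (auto simp: Pv_def)

end

context setting
begin

abbreviation hv where "hv s t \<equiv> peval fps_const (senv r0 s t)"
definition qv where "qv s j = peval fps_const (senv r0 s 0) (eth_x (vec_index E j))"
definition eS where "eS s i = peval fps_const (senv r0 s 0) (vec_index E i)"

lemma pvE: "i < n \<Longrightarrow> pvars (vec_index E i) \<subseteq> Vn n"
  using pv by (auto simp: Vn_def)

lemma Js_carrier: "jac_stream E r0 s \<in> carrier_mat n n" by (simp add: jac_stream_def dE)
lemma Js_index: "i < n \<Longrightarrow> j < n \<Longrightarrow> jac_stream E r0 s $$ (i,j) = peval fps_const (senv r0 s 0) (eth_y j (vec_index E i))"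
  by (simp add: jac_stream_def dE)
lemma J0_carrier: "jac_const E r0 \<in> carrier_mat n n" by (simp add: jac_const_def dE)

lemma hv_hom: "comm_ring_hom (hv s t)" by (rule peval_hom[OF hc])

lemma hv_uminus: "hv s t (- p) = - hv s t p"
proof -
  interpret comm_ring_hom "hv s t" by (rule hv_hom)
  show ?thesis by (rule hom_uminus)
qed

lemma L2: "map_mat (hv s t) Jp = jac_stream E r0 s"
proof (rule eq_matI)
  fix i j assume ij: "i < dim_row (jac_stream E r0 s)" "j < dim_col (jac_stream E r0 s)"
  then have "i < n" "j < n" by (auto simp: jac_stream_def dE)
  then show "map_mat (hv s t) Jp $$ (i, j) = jac_stream E r0 s $$ (i, j)"
    using peval_sub_senv[OF pvars_eth_y[OF pv[rule_format]] dr]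
    by (simp add: Jp_def Js_index)
qed (auto simp: jac_stream_def dE)

lemma L3: "hv s t Dp = det (jac_stream E r0 s)"
  unfolding Dp_def L2[symmetric, of s t] by (rule comm_ring_hom.hom_det[OF hv_hom, symmetric])

lemma L4: "i < n \<Longrightarrow> j < n \<Longrightarrow> hv s t (adj_mat Jp $$ (i,j)) = adj_mat (jac_stream E r0 s) $$ (i,j)"
  using arg_cong[OF hom_adj[OF hv_hom, of s t Jp], of "\<lambda>M. M $$ (i,j)"]
  by (simp add: L2 adj_mat_def)

lemma L5: "j < n \<Longrightarrow> hv s t (Qp j) = qv s j"
  unfolding Qp_def qv_def by (rule peval_sub_senv[OF pvars_eth_x[OF pv[rule_format]] dr])

lemma L6: "i < n \<Longrightarrow> hv s t (Pi i) = - (t * (\<Sum>j<n. adj_mat (jac_stream E r0 s) $$ (i,j) * qv s j))"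
  unfolding Pi_def
  by (simp add: peval_mult[OF hc] peval_sum[OF hc] peval_PVar[OF hc] hv_uminus
      L4 L5 senv_def)

lemma pvDp: "pvars Dp \<subseteq> Vn n" using pvars_Dp by (auto simp: Vn_def)

lemma L7: "hv s t Pn = - (fps_const (inverse d0) * t * (peval fps_const (senv r0 s 0) (eth_x Dp)
   + (\<Sum>j<n. peval fps_const (senv r0 s 0) (eth_y j Dp) * hv s t (Pi j))))"
  unfolding Pn_def
  by (simp add: peval_mult[OF hc] peval_sum[OF hc] peval_add[OF hc] peval_PVar[OF hc] peval_PConst[OF hc]
      hv_uminus senv_def
      peval_sub_senv[OF pvars_eth_x[OF pvars_Dp] dr] peval_sub_senv[OF pvars_eth_y[OF pvars_Dp] dr])

lemma L8: assumes "\<forall>i<n. fps_nth (vec_index s i) 0 = vec_index r0 i"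
  shows "fps_shift 1 (det (jac_stream E r0 s)) = peval fps_const (senv r0 s 0) (eth_x Dp)
     + (\<Sum>j<n. peval fps_const (senv r0 s 0) (eth_y j Dp) * fps_shift 1 (vec_index s j))"
  using stream_deriv[OF pvars_Dp assms, of 0] L3[of s 0] by simp

lemma L9: assumes "\<forall>i<n. fps_nth (vec_index s i) 0 = vec_index r0 i"
  shows "fps_nth (det (jac_stream E r0 s)) 0 = d0"
proof -
  have "map_mat (\<lambda>a. fps_nth a 0) (jac_stream E r0 s) = jac_const E r0"
  proof (rule eq_matI)
    fix i j assume "i < dim_row (jac_const E r0)" "j < dim_col (jac_const E r0)"
    then have ij: "i < n" "j < n" by (auto simp: jac_const_def dE)
    then show "map_mat (\<lambda>a. fps_nth a 0) (jac_stream E r0 s) $$ (i, j) = jac_const E r0 $$ (i, j)"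
      using peval_nth0[OF pvars_eth_y[OF pv[rule_format]] assms] Js_carrier[of s]
      by (simp add: Js_index jac_const_def dE)
  qed (auto simp: jac_stream_def jac_const_def)
  then show ?thesis unfolding d0_def
    using comm_ring_hom.hom_det[OF comm_ring_hom_nth0, of "jac_stream E r0 s"] by simp
qed

lemma L10: assumes "\<forall>i<n. fps_nth (vec_index s i) 0 = vec_index r0 i"
    and "\<forall>i<n. peval id (kenv r0 r0) (vec_index E i) = 0" and "i < n"
  shows "fps_nth (eS s i) 0 = 0"
  unfolding eS_def using peval_nth0[OF pvE[OF assms(3)] assms(1)] assms(2,3) by simp

lemma L11: assumes "\<forall>i<n. fps_nth (vec_index s i) 0 = vec_index r0 i" and "i < n"
  shows "fps_shift 1 (eS s i) = qv s i + (\<Sum>j<n. jac_stream E r0 s $$ (i,j) * fps_shift 1 (vec_index s j))"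
  unfolding eS_def qv_def using stream_deriv[OF pv[rule_format, OF assms(2)] assms(1), of 0] assms(2)
  by (simp add: Js_index)

lemma L12: "i < n \<Longrightarrow> peval fps_const (senv (0\<^sub>v n) s 0) (vec_index E i) = eS s i"
  unfolding eS_def
proof (rule peval_cong)
  fix u assume "i < n" "u \<in> pvars (vec_index E i)"
  with pv have "u = X \<or> (\<exists>j. u = Y j)" by auto
  then show "senv (0\<^sub>v n) s 0 u = senv r0 s 0 u" by (auto simp: senv_def)
qed

end

context setting
begin

lemma d0_nz: assumes "invertible_mat (jac_const E r0)" shows "d0 \<noteq> 0"
proof -
  from assms obtain B where AB: "inverts_mat (jac_const E r0) B" and BA: "inverts_mat B (jac_const E r0)"
    unfolding invertible_mat_def by blast
  have J: "jac_const E r0 \<in> carrier_mat n n" by (rule J0_carrier)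
  from BA have "B * jac_const E r0 = 1\<^sub>m (dim_row B)" by (simp add: inverts_mat_def)
  then have rB: "dim_row B = n" using J by (metis carrier_matD(2) index_mult_mat(3) index_one_mat(3))
  from AB have AB': "jac_const E r0 * B = 1\<^sub>m n" using J by (simp add: inverts_mat_def)
  then have "dim_col B = n" by (metis index_mult_mat(3) index_one_mat(3))
  with rB have Bc: "B \<in> carrier_mat n n" by auto
  have "det (jac_const E r0) * det B = 1"
    using det_mult[OF J Bc] AB' by simp
  then show ?thesis unfolding d0_def by auto
qed

lemma sum_neg_mult: "(\<Sum>j<n. a j * (- (t * b j))) = - (t * (\<Sum>j<n. a j * b j :: 'b::comm_ring_1))"
  by (simp add: sum_negf sum_distrib_left mult.left_commute)

lemma main:
  assumes z: "\<forall>i<n. peval id (kenv r0 r0) (vec_index E i) = 0"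
    and inv: "invertible_mat (jac_const E r0)"
  shows "\<exists>\<sigma>. stream_solution E \<sigma> \<and> (\<forall>i<n. fps_nth (vec_index \<sigma> i) 0 = vec_index r0 i)
     \<and> (\<forall>\<rho>. stream_solution E \<rho> \<and> (\<forall>i<n. fps_nth (vec_index \<rho> i) 0 = vec_index r0 i)
            \<longrightarrow> \<rho> = \<sigma>)
     \<and> invertible_mat (jac_stream E r0 \<sigma>)
     \<and> (\<forall>N \<in> carrier_mat n n. inverts_mat (jac_stream E r0 \<sigma>) N \<and> inverts_mat N (jac_stream E r0 \<sigma>)
          \<longrightarrow> vec n (\<lambda>i. sderiv_stream (vec_index \<sigma> i)) =
              - (N *\<^sub>v vec n (\<lambda>i. peval fps_const (senv r0 \<sigma> 0) (eth_x (vec_index E i)))))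
     \<and> (\<exists>P c. dim_vec P = Suc n
          \<and> (\<forall>i\<le>n. pvars (vec_index P i) \<subseteq> {X, W} \<union> Y ` {..<n})
          \<and> (\<exists>\<tau>. \<forall>\<rho> \<upsilon>. ivp_solution P r0 c \<rho> \<upsilon> \<longleftrightarrow> (\<rho> = \<sigma> \<and> \<upsilon> = \<tau>)))"
proof -
  have d0nz: "d0 \<noteq> 0" by (rule d0_nz[OF inv])
  define c where "c = inverse d0"
  define k where "k = (fps_const c :: 'a fps)"
  obtain s \<tau> where sol: "ivp_solution Pv r0 c s \<tau>"
    and uq: "\<forall>s' t'. ivp_solution Pv r0 c s' t' \<longrightarrow> s' = s \<and> t' = \<tau>"
    using ivp_exists_unique[of Pv r0 c] by blast
  have Pv_i: "vec_index Pv i = Pi i" if "i < n" for i using that by (simp add: Pv_def)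
  have Pv_n: "vec_index Pv n = Pn" by (simp add: Pv_def)
  have ivp_iff: "ivp_solution Pv r0 c \<rho> \<upsilon> \<longleftrightarrow> \<rho> \<in> carrier_vec n
      \<and> (\<forall>i<n. fps_shift 1 (vec_index \<rho> i) = hv \<rho> \<upsilon> (Pi i) \<and> fps_nth (vec_index \<rho> i) 0 = vec_index r0 i)
      \<and> fps_shift 1 \<upsilon> = hv \<rho> \<upsilon> Pn \<and> fps_nth \<upsilon> 0 = c" for \<rho> \<upsilon>
    unfolding ivp_solution_def dr using Pv_i Pv_n by auto
  from sol[unfolded ivp_iff] have sc: "s \<in> carrier_vec n"
    and s0: "\<forall>i<n. fps_nth (vec_index s i) 0 = vec_index r0 i"
    and ds: "\<forall>i<n. fps_shift 1 (vec_index s i) = hv s \<tau> (Pi i)"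
    and dt: "fps_shift 1 \<tau> = hv s \<tau> Pn" and t0: "fps_nth \<tau> 0 = c" by auto
  define J where "J = jac_stream E r0 s"
  define d where "d = det J"
  define A where "A = adj_mat J"
  define q where "q = qv s"
  have Jc: "J \<in> carrier_mat n n" unfolding J_def by (rule Js_carrier)
  have dsv: "fps_shift 1 (vec_index s i) = - (\<tau> * (\<Sum>j<n. A $$ (i,j) * q j))" if "i < n" for i
    using ds L6[OF that, of s \<tau>] that by (simp add: A_def J_def q_def)
  have dtv: "fps_shift 1 \<tau> = - (k * \<tau> * fps_shift 1 d)"
  proof -
    have "(\<Sum>j<n. peval fps_const (senv r0 s 0) (eth_y j Dp) * hv s \<tau> (Pi j))
        = (\<Sum>j<n. peval fps_const (senv r0 s 0) (eth_y j Dp) * fps_shift 1 (vec_index s j))"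
      by (rule sum.cong) (use ds in auto)
    then show ?thesis using dt L7[of s \<tau>] L8[OF s0] by (simp add: d_def J_def k_def c_def)
  qed
  have d00: "fps_nth d 0 = d0" unfolding d_def J_def by (rule L9[OF s0])
  have td: "\<tau> * d = 1"
  proof -
    define u where "u = 1 - \<tau> * d"
    have u0: "fps_nth u 0 = 0" using t0 d00 d0nz by (simp add: u_def c_def)
    have ks: "fps_const (fps_nth \<tau> 0) = k" by (simp add: t0 k_def)
    have "fps_shift 1 u = - (fps_shift 1 \<tau> * d + fps_const (fps_nth \<tau> 0) * fps_shift 1 d)"
      by (simp add: u_def fps_shift_diff fps_shift_one fps_shift1_mult fps_shift1_mult')
    also have "\<dots> = (- (k * fps_shift 1 d)) * u"
      unfolding ks dtv u_def by (simp add: algebra_simps)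
    finally have "u = 0" using fps_zero_shift u0 by blast
    then show ?thesis by (simp add: u_def)
  qed
  have eS0: "eS s i = 0" if i: "i < n" for i
  proof (rule fps_zero_shift0)
    show "fps_nth (eS s i) 0 = 0" by (rule L10[OF s0 z i])
    have "fps_shift 1 (eS s i) = q i + (\<Sum>j<n. J $$ (i,j) * (- (\<tau> * (\<Sum>k<n. A $$ (j,k) * q k))))"
      using L11[OF s0 i] dsv by (simp add: J_def q_def)
    also have "\<dots> = q i - \<tau> * (d * q i)"
      unfolding sum_neg_mult A_def d_def adj_solve1[OF Jc i] by simp
    also have "\<dots> = 0" using td by (simp add: mult.assoc[symmetric])
    finally show "fps_shift 1 (eS s i) = 0" .
  qed
  have ssol: "stream_solution E s"
    unfolding stream_solution_def dE using sc eS0 L12 by auto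
  have Ac: "A \<in> carrier_mat n n" unfolding A_def by (rule adj_mat(1)[OF Jc])
  have linS: "q i = - (\<Sum>j<n. J $$ (i,j) * fps_shift 1 (vec_index s j))" if i: "i < n" for i
    using L11[OF s0 i] eS0[OF i] by (simp add: J_def q_def eq_neg_iff_add_eq_0)
  have uniq: "\<rho> = s" if rs: "stream_solution E \<rho>" and r0': "\<forall>i<n. fps_nth (vec_index \<rho> i) 0 = vec_index r0 i" for \<rho>
  proof -
    have rc: "\<rho> \<in> carrier_vec n" using rs by (simp add: stream_solution_def dE)
    have eR: "eS \<rho> i = 0" if "i < n" for i using rs that L12[OF that, of \<rho>] by (simp add: stream_solution_def dE)
    define Jr where "Jr = jac_stream E r0 \<rho>"
    define dR where "dR = det Jr"
    define Ar where "Ar = adj_mat Jr"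
    define qr where "qr = qv \<rho>"
    define tr where "tr = inverse dR"
    define S where "S j = fps_shift 1 (vec_index \<rho> j)" for j
    have Jrc: "Jr \<in> carrier_mat n n" unfolding Jr_def by (rule Js_carrier)
    have dr0: "fps_nth dR 0 = d0" unfolding dR_def Jr_def by (rule L9[OF r0'])
    have trd: "tr * dR = 1" unfolding tr_def by (rule inverse_mult_eq_1) (simp add: dr0 d0nz)
    have "fps_nth (tr * dR) 0 = 1" using trd by simp
    then have "d0 * fps_nth tr 0 = 1" by (simp add: dr0 mult.commute)
    then have tr0: "fps_nth tr 0 = c" unfolding c_def using inverse_unique by metis
    have lin: "qr i = - (\<Sum>j<n. Jr $$ (i,j) * S j)" if i: "i < n" for i
      using L11[OF r0' i] eR[OF i] by (simp add: Jr_def qr_def S_def eq_neg_iff_add_eq_0)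
    have dRi: "fps_shift 1 (vec_index \<rho> i) = hv \<rho> tr (Pi i)" if i: "i < n" for i
    proof -
      have "(\<Sum>j<n. Ar $$ (i,j) * qr j) = (\<Sum>j<n. Ar $$ (i,j) * (- (\<Sum>k<n. Jr $$ (j,k) * S k)))"
        by (rule sum.cong) (auto simp: lin)
      also have "\<dots> = - (\<Sum>j<n. Ar $$ (i,j) * (\<Sum>k<n. Jr $$ (j,k) * S k))" by (simp add: sum_negf)
      also have "\<dots> = - (dR * S i)" unfolding Ar_def dR_def adj_solve2[OF Jrc i] ..
      finally have "hv \<rho> tr (Pi i) = tr * dR * S i"
        using L6[OF i, of \<rho> tr] by (simp add: Ar_def Jr_def qr_def mult.assoc)
      then show ?thesis by (simp add: trd S_def)
    qed
    have dT: "fps_shift 1 tr = hv \<rho> tr Pn"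
    proof -
      have "(\<Sum>j<n. peval fps_const (senv r0 \<rho> 0) (eth_y j Dp) * hv \<rho> tr (Pi j))
        = (\<Sum>j<n. peval fps_const (senv r0 \<rho> 0) (eth_y j Dp) * fps_shift 1 (vec_index \<rho> j))"
        by (rule sum.cong) (use dRi in auto)
      then have h: "hv \<rho> tr Pn = - (k * tr * fps_shift 1 dR)"
        using L7[of \<rho> tr] L8[OF r0'] by (simp add: dR_def Jr_def k_def c_def)
      have "0 = fps_shift 1 (tr * dR)" using trd by (simp add: fps_shift_one)
      also have "\<dots> = fps_shift 1 tr * dR + k * fps_shift 1 dR"
        by (simp add: fps_shift1_mult fps_shift1_mult' tr0 k_def)
      finally have e: "fps_shift 1 tr * dR = - (k * fps_shift 1 dR)" by (simp add: eq_neg_iff_add_eq_0)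
      have "fps_shift 1 tr = fps_shift 1 tr * dR * tr" using trd by (simp add: mult.assoc mult.commute)
      also have "\<dots> = - (k * tr * fps_shift 1 dR)" unfolding e by (simp add: ac_simps)
      finally show ?thesis using h by simp
    qed
    have "ivp_solution Pv r0 c \<rho> tr" unfolding ivp_iff using rc r0' dRi dT tr0 by auto
    then show "\<rho> = s" using uq by blast
  qed
  define B where "B = \<tau> \<cdot>\<^sub>m A"
  have JB: "J * B = 1\<^sub>m n"
  proof -
    have "J * B = \<tau> \<cdot>\<^sub>m (d \<cdot>\<^sub>m 1\<^sub>m n)" unfolding B_def mult_smult_distrib[OF Jc Ac]
      using adj_mat(2)[OF Jc] by (simp add: A_def d_def)
    also have "\<dots> = 1\<^sub>m n" by (rule eq_matI) (auto simp: td mult.assoc[symmetric])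
    finally show ?thesis .
  qed
  have BJ: "B * J = 1\<^sub>m n"
  proof -
    have "B * J = \<tau> \<cdot>\<^sub>m (d \<cdot>\<^sub>m 1\<^sub>m n)" unfolding B_def mult_smult_assoc_mat[OF Ac Jc]
      using adj_mat(3)[OF Jc] by (simp add: A_def d_def)
    also have "\<dots> = 1\<^sub>m n" by (rule eq_matI) (auto simp: td mult.assoc[symmetric])
    finally show ?thesis .
  qed
  have invJ: "invertible_mat J"
    unfolding invertible_mat_def inverts_mat_def using Jc Ac JB BJ
    by (intro conjI exI[of _ B]) (auto simp: square_mat.simps B_def)
  have form: "vec n (\<lambda>i. fps_shift 1 (vec_index s i)) =
      - (N *\<^sub>v vec n (\<lambda>i. peval fps_const (senv r0 s 0) (eth_x (vec_index E i))))"
    if Nc: "N \<in> carrier_mat n n" and NJ0: "inverts_mat J N \<and> inverts_mat N J" for N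
  proof -
    have NJ: "N * J = 1\<^sub>m n" using NJ0 Nc by (simp add: inverts_mat_def)
    show ?thesis
    proof (rule eq_vecI)
      show "dim_vec (vec n (\<lambda>i. fps_shift 1 (vec_index s i))) =
        dim_vec (- (N *\<^sub>v vec n (\<lambda>i. peval fps_const (senv r0 s 0) (eth_x (vec_index E i)))))"
        using Nc by simp
      fix i assume "i < dim_vec (- (N *\<^sub>v vec n (\<lambda>i. peval fps_const (senv r0 s 0) (eth_x (vec_index E i)))))"
      then have i: "i < n" using Nc by simp
      have "(N *\<^sub>v vec n (\<lambda>i. peval fps_const (senv r0 s 0) (eth_x (vec_index E i)))) $ i
          = (\<Sum>j<n. N $$ (i,j) * q j)"
        using Nc i by (simp add: scalar_prod_def atLeast0LessThan q_def qv_def)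
      also have "\<dots> = (\<Sum>j<n. N $$ (i,j) * (- (\<Sum>k<n. J $$ (j,k) * fps_shift 1 (vec_index s k))))"
        by (rule sum.cong) (auto simp: linS)
      also have "\<dots> = - fps_shift 1 (vec_index s i)"
        using inv_solve[OF Nc Jc NJ i, of "\<lambda>k. fps_shift 1 (vec_index s k)"] by (simp add: sum_negf)
      finally show "vec n (\<lambda>i. fps_shift 1 (vec_index s i)) $ i =
        (- (N *\<^sub>v vec n (\<lambda>i. peval fps_const (senv r0 s 0) (eth_x (vec_index E i))))) $ i"
        using Nc i by simp
    qed
  qed
  have ivpc: "\<exists>\<tau>'. \<forall>\<rho> \<upsilon>. ivp_solution Pv r0 c \<rho> \<upsilon> \<longleftrightarrow> (\<rho> = s \<and> \<upsilon> = \<tau>')"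
    using sol uq by blast
  have pvP: "\<forall>i\<le>n. pvars (vec_index Pv i) \<subseteq> {X, W} \<union> Y ` {..<n}" using pvars_Pv by auto
  have dP: "dim_vec Pv = Suc n" by (simp add: Pv_def)
  have c3: "\<forall>\<rho>. stream_solution E \<rho> \<and> (\<forall>i<n. fps_nth (vec_index \<rho> i) 0 = vec_index r0 i) \<longrightarrow> \<rho> = s"
    using uniq by blast
  have c4: "invertible_mat (jac_stream E r0 s)" using invJ by (simp only: J_def)
  have c5: "\<forall>N \<in> carrier_mat n n. inverts_mat (jac_stream E r0 s) N \<and> inverts_mat N (jac_stream E r0 s)
          \<longrightarrow> vec n (\<lambda>i. sderiv_stream (vec_index s i)) =
              - (N *\<^sub>v vec n (\<lambda>i. peval fps_const (senv r0 s 0) (eth_x (vec_index E i))))"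
    using form unfolding J_def by blast
  have c6: "\<exists>P c. dim_vec P = Suc n
          \<and> (\<forall>i\<le>n. pvars (vec_index P i) \<subseteq> {X, W} \<union> Y ` {..<n})
          \<and> (\<exists>\<tau>. \<forall>\<rho> \<upsilon>. ivp_solution P r0 c \<rho> \<upsilon> \<longleftrightarrow> (\<rho> = s \<and> \<upsilon> = \<tau>))"
    by (rule exI[of _ Pv], rule exI[of _ c]) (use dP pvP ivpc in blast)
  show ?thesis
    by (rule exI[of _ s], intro conjI) (fact ssol, fact s0, fact c3, fact c4, fact c5, fact c6)
qed

end

theorem theorem3p7:
  fixes E :: "'a::field_char_0 mpoly vec" and r0 :: "'a vec" and n :: nat
  assumes "dim_vec E = n" and "dim_vec r0 = n"
    and "\<forall>i<n. pvars (vec_index E i) \<subseteq> insert X (Y ` {..<n})"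
    and "\<forall>i<n. peval id (kenv r0 r0) (vec_index E i) = 0"
    and "invertible_mat (jac_const E r0)"
  shows "\<exists>\<sigma>. stream_solution E \<sigma> \<and> (\<forall>i<n. fps_nth (vec_index \<sigma> i) 0 = vec_index r0 i)
     \<and> (\<forall>\<rho>. stream_solution E \<rho> \<and> (\<forall>i<n. fps_nth (vec_index \<rho> i) 0 = vec_index r0 i)
            \<longrightarrow> \<rho> = \<sigma>)
     \<and> invertible_mat (jac_stream E r0 \<sigma>)
     \<and> (\<forall>N \<in> carrier_mat n n. inverts_mat (jac_stream E r0 \<sigma>) N \<and> inverts_mat N (jac_stream E r0 \<sigma>)
          \<longrightarrow> vec n (\<lambda>i. sderiv_stream (vec_index \<sigma> i)) =
              - (N *\<^sub>v vec n (\<lambda>i. peval fps_const (senv r0 \<sigma> 0) (eth_x (vec_index E i)))))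
     \<and> (\<exists>P c. dim_vec P = Suc n
          \<and> (\<forall>i\<le>n. pvars (vec_index P i) \<subseteq> {X, W} \<union> Y ` {..<n})
          \<and> (\<exists>\<tau>. \<forall>\<rho> \<upsilon>. ivp_solution P r0 c \<rho> \<upsilon> \<longleftrightarrow> (\<rho> = \<sigma> \<and> \<upsilon> = \<tau>)))"
proof -
  interpret setting E r0 n using assms(1,2,3) by unfold_locales auto
  show ?thesis by (rule main[OF assms(4) assms(5)])
qed

end
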